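(* Let $m\in\mathbb Z_{\ge0}$, let $\lambda/\mu$ be an r-shape and $\mathbf a,\mathbf b$ column flags for it. Then $$\mathsf g^{\mathbf a,\mathbf b}_{\lambda/\mu}(\mathbf x_m;\boldsymbol\alpha,\boldsymbol\beta)=\sum_{T\in GT_{\lambda/\mu}(\mathbf a,\mathbf b)}wt(T).$$ In particular, for a usual skew shape $\lambda/\mu$ with $a_i=-i+2$, $b_i=\lambda'_i+m-1$, $$g_{\lambda/\mu}(\mathbf x_m;\boldsymbol\alpha,\boldsymbol\beta)=\sum_{T\in GT_{\lambda/\mu}}wt(T).$$
   Context: Young diagrams in English notation; an r-shape $(\lambda/\mu,r)$ carries shifted contents $c(i,j)=j-i+r-1+\lambda'_1$; a usual skew shape has $c(i,j)=j-i$. Column flags: $\mathbf a,\mathbf b\in\mathbb Z^n$ ($n\ge\lambda_1$) with $a_i-a_{i+1}\le\mu'_i-\mu'_{i+1}+1$, $b_i-b_{i+1}\le\lambda'_i-\lambda'_{i+1}+1$ whenever $\mu'_i<\lambda'_{i+1}$; conjugates $a'_i=a_i+c(\gamma_i)$, $b'_i=b_i+c(\delta_i)$. $\mathbf w_{p,q}=(w_p,\ldots,w_q)$, $\mathbf w_k=\mathbf w_{1,k}$, $\overline{\mathbf w}=(-w_i)$, commas = union; $e_n(\mathbf x/\mathbf w)=\sum_{i=0}^n(-1)^{n-i}e_i(\mathbf x)h_{n-i}(\mathbf w)$; $\mathsf S^{\mathbf a,\mathbf b}_{\lambda/\mu}(\mathbf y/\mathbf z)=\det[e_{\lambda'_i-i-\mu'_j+j}(\mathbf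 y_{a_j,b_i}/\mathbf z_{a'_j,b'_i})]_{1\le i,j\le n}$. $g$-specialization: $y_i\mapsto x_i$ ($i\in[m]$), $\beta_{i-m}$ ($i>m$), $-\alpha_{-i+1}$ ($i\le0$); $z_i\mapsto0$ ($i\in[m]$), $-\alpha_{i-m}$ ($i>m$), $\beta_{-i+1}$ ($i\le0$). $\mathsf g^{\mathbf a,\mathbf b}_{\lambda/\mu}(\mathbf x_m;\boldsymbol\alpha,\boldsymbol\beta)=\mathsf S^{\mathbf a,\mathbf b}_{\lambda/\mu}(\mathbf y/\mathbf z)|_g$. $g_{\lambda/\mu}(\mathbf x_m;\boldsymbol\alpha,\boldsymbol\beta)=\det[e_{\lambda'_i-i-\mu'_j+j}(\mathbf x_m,\overline{\boldsymbol\alpha}_{j-1},\boldsymbol\beta_{\lambda'_i-1}/\overline{\boldsymbol\alpha}_{i-1},\boldsymbol\beta_{\mu'_j})]_{1\le i,j\le n}$. Super tableaux: a flagged $\mathbb Z$-SSYT is a filling $\tilde T$ by integers, weakly increasing along rows, strictly increasing down columns, with $a_j\le\tilde T_{ij}\le b_j$ in column $j$; a flagged super tableau is obtained by choosing per cell either $\tilde T_{ij}$ or the primed integer $(\tilde T_{ij}+c(i,j))'$; $ST_{\lambda/\mu}(\mathbf a,\mathbf b)$ is the set of these. $\mathsf g$-tableaux: for $\tilde T\in ST_{\lambda/\mu}(\mathbf a,\mathbf b)$ containing no primed entry from $\{1',\ldots,m'\}$, define $T$ cellwise: an unprimed entry $t\in[m]$ stays $t$; unprimed $t>m$ becomes $(t-m)^\circ$;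 unprimed $t\le0$ becomes $(t-1)^\bullet$; primed $t'$ with $t>m$ becomes $(t-m)^\bullet$; primed $t'$ with $t\le0$ becomes $(t-1)^\circ$. $GT_{\lambda/\mu}(\mathbf a,\mathbf b)$ is the set of all such $T$; for the usual shape with $a_i=-i+2$, $b_i=\lambda'_i+m-1$ it is denoted $GT_{\lambda/\mu}$. Weight: $wt(T)=\prod wt(T_{ij})$ with, for $r>0$: $wt(r)=x_r$, $wt(r^\bullet)=\alpha_r$, $wt((-r)^\bullet)=-\alpha_r$, $wt(r^\circ)=\beta_r$, $wt((-r)^\circ)=-\beta_r$. *)

theory Defs
  imports "Jordan_Normal_Form.Determinant"
begin

definition is_partition :: "nat list \<Rightarrow> bool" where
  "is_partition la \<longleftrightarrow> sorted_wrt (\<ge>) la \<and> 0 \<notin> set la"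

definition part :: "nat list \<Rightarrow> nat \<Rightarrow> nat" where
  "part la i = (if 1 \<le> i \<and> i \<le> length la then la ! (i - 1) else 0)"

text \<open>Conjugate partition: conj la j = la'_j = number of parts \<ge> j (for j \<ge> 1).\<close>
definition conj :: "nat list \<Rightarrow> nat \<Rightarrow> nat" where
  "conj la j = length (filter (\<lambda>p. j \<le> p) la)"

definition subpart :: "nat list \<Rightarrow> nat list \<Rightarrow> bool" where
  "subpart mu la \<longleftrightarrow> (\<forall>i. part mu i \<le> part la i)"

text \<open>Cells (i,j) (row i, column j, English notation) of the skew diagram la/mu.\<close>
definition skew_cells :: "nat list \<Rightarrow> nat list \<Rightarrow> (nat \<times> nat) set" where
  "skew_cells la mu = {(i, j). 1 \<le> i \<and> 1 \<le> j \<and> part mu i < j \<and> j \<le> part la i}"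

definition rcont :: "int \<Rightarrow> nat list \<Rightarrow> nat \<Rightarrow> nat \<Rightarrow> int" where
  "rcont r la i j = int j - int i + r - 1 + int (conj la 1)"

definition ucont :: "nat \<Rightarrow> nat \<Rightarrow> int" where
  "ucont i j = int j - int i"

definition column_flags :: "nat list \<Rightarrow> nat list \<Rightarrow> nat \<Rightarrow> (nat \<Rightarrow> int) \<Rightarrow> (nat \<Rightarrow> int) \<Rightarrow> bool" where
  "column_flags la mu n a b \<longleftrightarrow>
     (\<forall>i. 1 \<le> i \<and> i < n \<and> conj mu i < conj la (i + 1) \<longrightarrow>
        a i - a (i + 1) \<le> int (conj mu i) - int (conj mu (i + 1)) + 1 \<and>
        b i - b (i + 1) \<le> int (conj la i) - int (conj la (i + 1)) + 1)"

definition esym :: "'a::comm_ring_1 list \<Rightarrow> nat \<Rightarrow> 'a" where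
  "esym L k = (\<Sum>S\<in>{S. S \<subseteq> {..<length L} \<and> card S = k}. \<Prod>i\<in>S. L ! i)"

definition hsym :: "'a::comm_ring_1 list \<Rightarrow> nat \<Rightarrow> 'a" where
  "hsym L k = (\<Sum>f\<in>{f. (\<forall>i. length L \<le> i \<longrightarrow> f i = 0) \<and> (\<Sum>i<length L. f i) = k}.
                  \<Prod>i<length L. (L ! i) ^ f i)"

definition esup :: "int \<Rightarrow> 'a::comm_ring_1 list \<Rightarrow> 'a list \<Rightarrow> 'a" where
  "esup k X W = (if k < 0 then 0 else
     (\<Sum>i\<in>{0..nat k}. (-1) ^ (nat k - i) * esym X i * hsym W (nat k - i)))"

definition alph :: "(int \<Rightarrow> 'a) \<Rightarrow> int \<Rightarrow> int \<Rightarrow> 'a list" where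
  "alph y p q = map y [p..q]"

text \<open>cf is the content function of the shape; gamma_j = (mu'_j + 1, j) is the top cell and
  delta_i = (la'_i, i) the bottom cell of column j resp. i, so
  a'_j = a_j + c(gamma_j), b'_i = b_i + c(delta_i).\<close>
definition Sdet :: "(nat \<Rightarrow> nat \<Rightarrow> int) \<Rightarrow> nat list \<Rightarrow> nat list \<Rightarrow> nat \<Rightarrow>
    (nat \<Rightarrow> int) \<Rightarrow> (nat \<Rightarrow> int) \<Rightarrow> (int \<Rightarrow> 'a::comm_ring_1) \<Rightarrow> (int \<Rightarrow> 'a) \<Rightarrow> 'a" where
  "Sdet cf la mu n a b y z =
     det (mat n n (\<lambda>(i0, j0).
       let i = i0 + 1; j = j0 + 1;
           a' = a j + cf (conj mu j + 1) j;
           b' = b i + cf (conj la i) i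
       in esup (int (conj la i) - int i - int (conj mu j) + int j)
               (alph y (a j) (b i)) (alph z a' b')))"

definition gy :: "nat \<Rightarrow> (nat \<Rightarrow> 'a::comm_ring_1) \<Rightarrow> (nat \<Rightarrow> 'a) \<Rightarrow> (nat \<Rightarrow> 'a) \<Rightarrow> int \<Rightarrow> 'a" where
  "gy m x \<alpha> \<beta> k = (if 1 \<le> k \<and> k \<le> int m then x (nat k)
                    else if k > int m then \<beta> (nat (k - int m))
                    else - \<alpha> (nat (- k + 1)))"

definition gz :: "nat \<Rightarrow> (nat \<Rightarrow> 'a::comm_ring_1) \<Rightarrow> (nat \<Rightarrow> 'a) \<Rightarrow> int \<Rightarrow> 'a" where
  "gz m \<alpha> \<beta> k = (if 1 \<le> k \<and> k \<le> int m then 0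
                  else if k > int m then - \<alpha> (nat (k - int m))
                  else \<beta> (nat (- k + 1)))"

definition gflag :: "(nat \<Rightarrow> nat \<Rightarrow> int) \<Rightarrow> nat list \<Rightarrow> nat list \<Rightarrow> nat \<Rightarrow>
    (nat \<Rightarrow> int) \<Rightarrow> (nat \<Rightarrow> int) \<Rightarrow> nat \<Rightarrow>
    (nat \<Rightarrow> 'a::comm_ring_1) \<Rightarrow> (nat \<Rightarrow> 'a) \<Rightarrow> (nat \<Rightarrow> 'a) \<Rightarrow> 'a" where
  "gflag cf la mu n a b m x \<alpha> \<beta> = Sdet cf la mu n a b (gy m x \<alpha> \<beta>) (gz m \<alpha> \<beta>)"

definition gusual :: "nat list \<Rightarrow> nat list \<Rightarrow> nat \<Rightarrow> nat \<Rightarrow>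
    (nat \<Rightarrow> 'a::comm_ring_1) \<Rightarrow> (nat \<Rightarrow> 'a) \<Rightarrow> (nat \<Rightarrow> 'a) \<Rightarrow> 'a" where
  "gusual la mu n m x \<alpha> \<beta> =
     det (mat n n (\<lambda>(i0, j0).
       let i = i0 + 1; j = j0 + 1
       in esup (int (conj la i) - int i - int (conj mu j) + int j)
            (map x [1..<m + 1] @ map (\<lambda>k. - \<alpha> k) [1..<j] @ map \<beta> [1..<conj la i])
            (map (\<lambda>k. - \<alpha> k) [1..<i] @ map \<beta> [1..<conj mu j + 1])))"

definition flagged_ssyt :: "(nat \<times> nat) set \<Rightarrow> (nat \<Rightarrow> int) \<Rightarrow> (nat \<Rightarrow> int) \<Rightarrow>
    (nat \<times> nat \<Rightarrow> int) \<Rightarrow> bool" where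
  "flagged_ssyt C a b T \<longleftrightarrow>
     (\<forall>i j. (i, j) \<in> C \<longrightarrow> a j \<le> T (i, j) \<and> T (i, j) \<le> b j) \<and>
     (\<forall>i j. (i, j) \<in> C \<and> (i, j + 1) \<in> C \<longrightarrow> T (i, j) \<le> T (i, j + 1)) \<and>
     (\<forall>i j. (i, j) \<in> C \<and> (i + 1, j) \<in> C \<longrightarrow> T (i, j) < T (i + 1, j))"

datatype sentry = Unp int | Pr int

text \<open>Flagged super tableaux; cells outside C carry the dummy value Unp 0.\<close>
definition super_tabs :: "(nat \<times> nat) set \<Rightarrow> (nat \<Rightarrow> nat \<Rightarrow> int) \<Rightarrow>
    (nat \<Rightarrow> int) \<Rightarrow> (nat \<Rightarrow> int) \<Rightarrow> (nat \<times> nat \<Rightarrow> sentry) set" where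
  "super_tabs C cf a b = {S. \<exists>T P. flagged_ssyt C a b T \<and> P \<subseteq> C \<and>
      S = (\<lambda>(i, j). if (i, j) \<in> C then
                       (if (i, j) \<in> P then Pr (T (i, j) + cf i j) else Unp (T (i, j)))
                     else Unp 0)}"

datatype gentry = Plain int | Bul int | Circ int

definition to_g :: "nat \<Rightarrow> (nat \<times> nat) set \<Rightarrow> (nat \<times> nat \<Rightarrow> sentry) \<Rightarrow> (nat \<times> nat \<Rightarrow> gentry)" where
  "to_g m C S = (\<lambda>c. if c \<in> C then
      (case S c of
         Unp t \<Rightarrow> (if 1 \<le> t \<and> t \<le> int m then Plain t
                   else if t > int m then Circ (t - int m) else Bul (t - 1))
       | Pr t \<Rightarrow> (if t > int m then Bul (t - int m) else Circ (t - 1)))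
    else Plain 0)"

definition g_tabs :: "nat \<Rightarrow> (nat \<times> nat) set \<Rightarrow> (nat \<Rightarrow> nat \<Rightarrow> int) \<Rightarrow>
    (nat \<Rightarrow> int) \<Rightarrow> (nat \<Rightarrow> int) \<Rightarrow> (nat \<times> nat \<Rightarrow> gentry) set" where
  "g_tabs m C cf a b = to_g m C `
     {S \<in> super_tabs C cf a b. \<forall>c t. S c = Pr t \<longrightarrow> \<not> (1 \<le> t \<and> t \<le> int m)}"

definition gwt :: "(nat \<Rightarrow> 'a::comm_ring_1) \<Rightarrow> (nat \<Rightarrow> 'a) \<Rightarrow> (nat \<Rightarrow> 'a) \<Rightarrow> gentry \<Rightarrow> 'a" where
  "gwt x \<alpha> \<beta> e = (case e of
      Plain r \<Rightarrow> x (nat r)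
    | Bul r \<Rightarrow> (if r > 0 then \<alpha> (nat r) else - \<alpha> (nat (- r)))
    | Circ r \<Rightarrow> (if r > 0 then \<beta> (nat r) else - \<beta> (nat (- r))))"

definition tab_wt :: "(nat \<times> nat) set \<Rightarrow> (nat \<Rightarrow> 'a::comm_ring_1) \<Rightarrow> (nat \<Rightarrow> 'a) \<Rightarrow> (nat \<Rightarrow> 'a) \<Rightarrow>
    (nat \<times> nat \<Rightarrow> gentry) \<Rightarrow> 'a" where
  "tab_wt C x \<alpha> \<beta> T = (\<Prod>c\<in>C. gwt x \<alpha> \<beta> (T c))"

definition GT_usual :: "nat \<Rightarrow> nat list \<Rightarrow> nat list \<Rightarrow> (nat \<times> nat \<Rightarrow> gentry) set" where
  "GT_usual m la mu = g_tabs m (skew_cells la mu) ucont (\<lambda>i. 2 - int i)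
                        (\<lambda>i. int (conj la i) + int m - 1)"

end

theory Submission
  imports Defs "HOL-Library.Disjoint_Sets"
begin

lemma esym_zero[simp]: "esym L 0 = 1"
proof -
  have "{S. S \<subseteq> {..<length L} \<and> card S = 0} = {{}}"
    by (auto dest: finite_subset)
  then show ?thesis by (simp add: esym_def)
qed

lemma esym_big: "length L < k \<Longrightarrow> esym L k = 0"
proof -
  assume "length L < k"
  moreover have "card S \<le> length L" if "S \<subseteq> {..<length L}" for S
    using card_mono[OF finite_lessThan that] by simp
  ultimately have E: "{S. S \<subseteq> {..<length L} \<and> card S = k} = {}"
    by (metis (mono_tags, lifting) empty_Collect_eq leD)
  show ?thesis unfolding esym_def E by simp
qed

lemma esym_snoc: "esym (L @ [v]) (Suc k) = esym L (Suc k) + v * esym L k"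
proof -
  define n where "n = length L"
  define A1 where "A1 = {S. S \<subseteq> {..<n} \<and> card S = Suc k}"
  define A0 where "A0 = {S. S \<subseteq> {..<n} \<and> card S = k}"
  have fin1: "finite A1" unfolding A1_def by (rule finite_subset[of _ "Pow {..<n}"]) auto
  have fin0: "finite A0" unfolding A0_def by (rule finite_subset[of _ "Pow {..<n}"]) auto
  have split: "{S. S \<subseteq> {..<length (L@[v])} \<and> card S = Suc k} = A1 \<union> insert n ` A0"
  proof (intro equalityI subsetI)
    fix S assume "S \<in> {S. S \<subseteq> {..<length (L@[v])} \<and> card S = Suc k}"
    then have S: "S \<subseteq> {..<Suc n}" "card S = Suc k" by (auto simp: n_def)
    show "S \<in> A1 \<union> insert n ` A0"
    proof (cases "n \<in> S")
      case True
      then have "S = insert n (S - {n})" by auto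
      moreover have "S - {n} \<in> A0" using S True unfolding A0_def
        by (auto simp: card_Diff_singleton_if dest: finite_subset)
      ultimately show ?thesis by blast
    next
      case False
      then have "S \<in> A1" using S unfolding A1_def by (auto) (metis lessThan_iff less_SucE subsetD)
      then show ?thesis by blast
    qed
  next
    fix S assume S: "S \<in> A1 \<union> insert n ` A0"
    show "S \<in> {S. S \<subseteq> {..<length (L@[v])} \<and> card S = Suc k}"
    proof (cases "S \<in> A1")
      case True then show ?thesis by (auto simp: A1_def n_def)
    next
      case False
      then obtain T where T: "T \<in> A0" "S = insert n T" using S by auto
      then have "finite T" "n \<notin> T" by (auto simp: A0_def dest: finite_subset)
      then show ?thesis using T by (auto simp: A0_def n_def)
    qed
  qed
  have disj: "A1 \<inter> insert n ` A0 = {}" unfolding A1_def A0_def by auto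
  have inj: "inj_on (insert n) A0"
  proof (rule inj_onI)
    fix S T assume "S \<in> A0" "T \<in> A0" "insert n S = insert n T"
    then have "n \<notin> S" "n \<notin> T" by (auto simp: A0_def)
    then show "S = T" using \<open>insert n S = insert n T\<close> by (metis Diff_insert_absorb)
  qed
  have p1: "(\<Prod>i\<in>S. (L @ [v]) ! i) = (\<Prod>i\<in>S. L ! i)" if "S \<in> A1 \<union> A0" for S
    using that unfolding A1_def A0_def n_def by (intro prod.cong) (auto simp: nth_append)
  have p2: "(\<Prod>i\<in>insert n S. (L @ [v]) ! i) = v * (\<Prod>i\<in>S. L ! i)" if "S \<in> A0" for S
  proof -
    have "finite S" "n \<notin> S" using that unfolding A0_def by (auto dest: finite_subset)
    then have "(\<Prod>i\<in>insert n S. (L @ [v]) ! i) = (L @ [v]) ! n * (\<Prod>i\<in>S. (L @ [v]) ! i)" by simp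
    also have "\<dots> = v * (\<Prod>i\<in>S. L ! i)" using p1[of S] that by (simp add: n_def nth_append)
    finally show ?thesis .
  qed
  have "esym (L @ [v]) (Suc k) = (\<Sum>S\<in>A1. \<Prod>i\<in>S. (L @ [v]) ! i) + (\<Sum>S\<in>insert n ` A0. \<Prod>i\<in>S. (L @ [v]) ! i)"
    unfolding esym_def split using fin1 fin0 disj by (simp add: sum.union_disjoint)
  also have "(\<Sum>S\<in>A1. \<Prod>i\<in>S. (L @ [v]) ! i) = esym L (Suc k)"
    unfolding esym_def A1_def n_def by (intro sum.cong) (auto intro!: p1 simp: A1_def n_def)
  also have "(\<Sum>S\<in>insert n ` A0. \<Prod>i\<in>S. (L @ [v]) ! i) = (\<Sum>S\<in>A0. v * (\<Prod>i\<in>S. L ! i))"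
    by (simp add: sum.reindex[OF inj] p2)
  also have "\<dots> = v * esym L k" unfolding esym_def A0_def n_def by (simp add: sum_distrib_left)
  finally show ?thesis .
qed

definition Fs :: "nat \<Rightarrow> nat \<Rightarrow> (nat \<Rightarrow> nat) set" where
  "Fs n k = {f. (\<forall>i. n \<le> i \<longrightarrow> f i = 0) \<and> (\<Sum>i<n. f i) = k}"

lemma hsym_Fs: "hsym L k = (\<Sum>f\<in>Fs (length L) k. \<Prod>i<length L. (L ! i) ^ f i)"
  unfolding hsym_def Fs_def by simp

lemma finite_Fs: "finite (Fs n k)"
proof -
  have "Fs n k \<subseteq> {f. (\<forall>i. n \<le> i \<longrightarrow> f i = 0) \<and> (\<forall>i. f i \<le> k)}"
    unfolding Fs_def
  proof (safe)
    fix f i assume "\<forall>i\<ge>n. f i = 0" "k = (\<Sum>i<n. f i)"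
    then show "f i \<le> (\<Sum>i<n. f i)"
      by (cases "i < n") (auto intro: member_le_sum)
  qed
  moreover have "finite {f. (\<forall>i. n \<le> i \<longrightarrow> f i = 0) \<and> (\<forall>i. f i \<le> k)}"
  proof -
    have "{f. (\<forall>i. n \<le> i \<longrightarrow> f i = 0) \<and> (\<forall>i. f i \<le> k)} \<subseteq> (\<lambda>g i. if i < n then g i else 0) ` PiE {..<n} (\<lambda>_. {..k})"
    proof
      fix f assume f: "f \<in> {f. (\<forall>i. n \<le> i \<longrightarrow> f i = 0) \<and> (\<forall>i. f i \<le> k)}"
      have "f = (\<lambda>i. if i < n then restrict f {..<n} i else 0)" using f by (auto simp: fun_eq_iff)
      moreover have "restrict f {..<n} \<in> PiE {..<n} (\<lambda>_. {..k})" using f by auto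
      ultimately show "f \<in> (\<lambda>g i. if i < n then g i else 0) ` PiE {..<n} (\<lambda>_. {..k})" by blast
    qed
    then show ?thesis by (rule finite_subset) (auto intro: finite_PiE)
  qed
  ultimately show ?thesis by (rule finite_subset)
qed

lemma hsym_zero[simp]: "hsym L 0 = 1"
proof -
  have "Fs (length L) 0 = {\<lambda>_. 0}"
    unfolding Fs_def by (auto simp: fun_eq_iff) (metis lessThan_iff not_le)
  then show ?thesis by (simp add: hsym_Fs)
qed

lemma hsym_Nil_Suc[simp]: "hsym [] (Suc k) = 0"
proof -
  have "Fs 0 (Suc k) = {}" unfolding Fs_def by auto
  then show ?thesis by (simp add: hsym_Fs)
qed

lemma esym_Nil_Suc[simp]: "esym [] (Suc k) = 0"
  by (rule esym_big) simp

lemma hsym_snoc: "hsym (L @ [v]) (Suc k) = hsym L (Suc k) + v * hsym (L @ [v]) k"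
proof -
  define n where "n = length L"
  define P where "P = (\<lambda>f. \<Prod>i<Suc n. ((L @ [v]) ! i) ^ f i)"
  define B1 where "B1 = {f \<in> Fs (Suc n) (Suc k). f n = 0}"
  define B2 where "B2 = {f \<in> Fs (Suc n) (Suc k). f n \<noteq> 0}"
  have B1: "B1 = Fs n (Suc k)"
    unfolding B1_def Fs_def by (auto simp: le_Suc_eq) (metis Suc_leI le_neq_implies_less)
  have fin: "finite B1" "finite B2" unfolding B1_def B2_def using finite_Fs by auto
  have "hsym (L @ [v]) (Suc k) = sum P (B1 \<union> B2)"
    unfolding hsym_Fs P_def n_def B1_def B2_def by (intro sum.cong) auto
  also have "\<dots> = sum P B1 + sum P B2" using fin by (intro sum.union_disjoint) (auto simp: B1_def B2_def)
  also have "sum P B1 = hsym L (Suc k)"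
    unfolding B1 hsym_Fs P_def n_def
    by (intro sum.cong refl) (auto simp: Fs_def nth_append)
  also have "sum P B2 = v * hsym (L @ [v]) k"
  proof -
    define dec where "dec = (\<lambda>f::nat\<Rightarrow>nat. f(n := f n - 1))"
    define inc where "inc = (\<lambda>f::nat\<Rightarrow>nat. f(n := Suc (f n)))"
    have bij: "bij_betw inc (Fs (Suc n) k) B2"
    proof (rule bij_betw_byWitness[where f'=dec])
      show "\<forall>a\<in>Fs (Suc n) k. dec (inc a) = a" by (auto simp: dec_def inc_def)
      show "\<forall>a'\<in>B2. inc (dec a') = a'" by (auto simp: dec_def inc_def B2_def fun_eq_iff)
      show "inc ` Fs (Suc n) k \<subseteq> B2"
      proof
        fix g assume "g \<in> inc ` Fs (Suc n) k"
        then obtain f where f: "f \<in> Fs (Suc n) k" "g = inc f" by auto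
        have "(\<Sum>i<Suc n. g i) = (\<Sum>i<n. f i) + Suc (f n)"
          using f by (simp add: inc_def)
        also have "\<dots> = Suc k" using f by (simp add: Fs_def)
        finally show "g \<in> B2" using f by (auto simp: B2_def Fs_def inc_def)
      qed
      show "dec ` B2 \<subseteq> Fs (Suc n) k"
      proof
        fix g assume "g \<in> dec ` B2"
        then obtain f where f: "f \<in> B2" "g = dec f" by auto
        have "(\<Sum>i<Suc n. g i) = (\<Sum>i<n. f i) + (f n - 1)"
          using f by (simp add: dec_def)
        also have "\<dots> = k" using f by (simp add: Fs_def B2_def)
        finally show "g \<in> Fs (Suc n) k" using f by (auto simp: B2_def Fs_def dec_def)
      qed
    qed
    have "sum P B2 = sum (P \<circ> inc) (Fs (Suc n) k)"
      using bij by (simp add: sum.reindex_bij_betw)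
    also have "\<dots> = (\<Sum>f\<in>Fs (Suc n) k. v * P f)"
    proof (intro sum.cong refl)
      fix f
      have "(P \<circ> inc) f = (\<Prod>i<n. ((L @ [v]) ! i) ^ f i) * v ^ Suc (f n)"
        by (simp add: P_def inc_def nth_append n_def)
      also have "\<dots> = v * ((\<Prod>i<n. ((L @ [v]) ! i) ^ f i) * v ^ f n)" by (simp add: algebra_simps)
      also have "\<dots> = v * P f" by (simp add: P_def nth_append n_def)
      finally show "(P \<circ> inc) f = v * P f" .
    qed
    also have "\<dots> = v * hsym (L @ [v]) k"
      by (simp add: hsym_Fs sum_distrib_left P_def n_def)
    finally show ?thesis .
  qed
  finally show ?thesis .
qed

definition ep :: "nat \<Rightarrow> 'a list \<Rightarrow> 'a list \<Rightarrow> 'a::comm_ring_1" where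
  "ep K X W = (\<Sum>i=0..K. (-1)^(K-i) * esym X i * hsym W (K-i))"

lemma esup_ep: "esup k X W = (if k < 0 then 0 else ep (nat k) X W)"
  by (simp add: esup_def ep_def)

lemma ep_0[simp]: "ep 0 X W = 1"
  by (simp add: ep_def)

lemma ep_snocX: "ep (Suc K) (X@[v]) W = ep (Suc K) X W + v * ep K X W"
proof -
  have "ep (Suc K) (X@[v]) W = (-1)^(Suc K) * esym (X@[v]) 0 * hsym W (Suc K)
      + (\<Sum>i=0..K. (-1)^(K-i) * esym (X@[v]) (Suc i) * hsym W (K-i))"
    unfolding ep_def by (subst sum.atLeast0_atMost_Suc_shift) simp
  also have "\<dots> = ((-1)^(Suc K) * esym X 0 * hsym W (Suc K)
      + (\<Sum>i=0..K. (-1)^(K-i) * esym X (Suc i) * hsym W (K-i)))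
      + v * (\<Sum>i=0..K. (-1)^(K-i) * esym X i * hsym W (K-i))"
    by (simp add: esym_snoc algebra_simps sum.distrib sum_distrib_left)
  also have "\<dots> = ep (Suc K) X W + v * ep K X W"
    unfolding ep_def sum.atLeast0_atMost_Suc_shift by simp
  finally show ?thesis .
qed

lemma ep_split_last: "ep (Suc K) X W = (\<Sum>i=0..K. (-1)^(Suc (K-i)) * esym X i * hsym W (Suc (K-i))) + esym X (Suc K)"
proof -
  have "ep (Suc K) X W = (\<Sum>i=0..K. (-1)^(Suc K-i) * esym X i * hsym W (Suc K-i)) + esym X (Suc K)"
    unfolding ep_def by (subst sum.atLeast0_atMost_Suc) simp
  also have "(\<Sum>i=0..K. (-1)^(Suc K-i) * esym X i * hsym W (Suc K-i)) = (\<Sum>i=0..K. (-1)^(Suc (K-i)) * esym X i * hsym W (Suc (K-i)))"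
    by (intro sum.cong refl) (simp add: Suc_diff_le)
  finally show ?thesis .
qed

lemma ep_snocW: "ep (Suc K) X (W@[v]) = ep (Suc K) X W - v * ep K X (W@[v])"
proof -
  have "ep (Suc K) X (W@[v]) = (\<Sum>i=0..K. (-1)^(Suc (K-i)) * esym X i * hsym W (Suc (K-i)))
     + (\<Sum>i=0..K. (-1)^(Suc (K-i)) * esym X i * (v * hsym (W@[v]) (K-i))) + esym X (Suc K)"
    unfolding ep_split_last by (simp only: hsym_snoc distrib_left sum.distrib)
  also have "(\<Sum>i=0..K. (-1)^(Suc (K-i)) * esym X i * (v * hsym (W@[v]) (K-i))) = - (v * ep K X (W@[v]))"
    unfolding ep_def by (simp add: sum_distrib_left algebra_simps sum_negf[symmetric])
  finally show ?thesis unfolding ep_split_last[of K X W] by simp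
qed

lemma ep_Nil_Nil: "ep (Suc K) [] [] = 0"
  unfolding ep_def
proof (intro sum.neutral ballI)
  fix i assume "i \<in> {0..Suc K}"
  show "(-1)^(Suc K-i) * esym [] i * hsym [] (Suc K-i) = (0::'a)"
  proof (cases i)
    case 0 then show ?thesis by simp
  next
    case (Suc j) then show ?thesis by (simp add: esym_big)
  qed
qed

lemma ep_big_Nil: "length X < K \<Longrightarrow> ep K X [] = 0"
proof -
  assume a: "length X < K"
  show ?thesis unfolding ep_def
  proof (intro sum.neutral ballI)
    fix i assume "i \<in> {0..K}"
    show "(-1)^(K-i) * esym X i * hsym [] (K-i) = 0"
    proof (cases "i = K")
      case True then show ?thesis using a by (simp add: esym_big)
    next
      case False then obtain j where "K - i = Suc j" using \<open>i \<in> {0..K}\<close>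
        by (metis atLeastAtMost_iff diff_diff_cancel le_neq_implies_less less_imp_Suc_add zero_less_diff Suc_diff_Suc)
      then show ?thesis by simp
    qed
  qed
qed

definition Nc :: "int set \<Rightarrow> int \<Rightarrow> nat" where
  "Nc S s = card {t\<in>S. t < s}"

definition Wc :: "(int \<Rightarrow> int \<Rightarrow> 'a::comm_ring_1) \<Rightarrow> int \<Rightarrow> int set \<Rightarrow> 'a" where
  "Wc \<phi> c S = (\<Prod>s\<in>S. \<phi> s (c - int (Nc S s)))"

definition Pset :: "int \<Rightarrow> int \<Rightarrow> int \<Rightarrow> int set set" where
  "Pset A B k = {S. S \<subseteq> {A..B} \<and> int (card S) = k}"

lemma finite_Pset: "finite (Pset A B k)"
  unfolding Pset_def by (rule finite_subset[of _ "Pow {A..B}"]) auto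

lemma Pset_nonpos: "k \<le> 0 \<Longrightarrow> Pset A B k = (if k = 0 then {{}} else {})"
  unfolding Pset_def by (auto dest: finite_subset)

lemma alph_empty: "B < A \<Longrightarrow> alph y A B = []"
  by (simp add: alph_def)

lemma alph_snoc: "A \<le> B \<Longrightarrow> alph y A B = alph y A (B - 1) @ [y B]"
  by (simp add: alph_def upto_rec2)

lemma length_alph: "length (alph y A B) = nat (B - A + 1)"
  by (simp add: alph_def)

lemma Pset_step:
  assumes "A \<le> B"
  shows "Pset A B (int (Suc K)) = Pset A (B - 1) (int (Suc K)) \<union> insert B ` Pset A (B - 1) (int K)"
proof (intro equalityI subsetI)
  fix S assume S: "S \<in> Pset A B (int (Suc K))"
  then have fS: "finite S" unfolding Pset_def by (auto dest: finite_subset)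
  show "S \<in> Pset A (B - 1) (int (Suc K)) \<union> insert B ` Pset A (B - 1) (int K)"
  proof (cases "B \<in> S")
    case True
    then have "S = insert B (S - {B})" by auto
    moreover have "S - {B} \<in> Pset A (B - 1) (int K)" using S True fS unfolding Pset_def
      by (auto simp: card_Diff_singleton_if)
    ultimately show ?thesis by blast
  next
    case False
    have "S \<subseteq> {A..B-1}"
    proof
      fix s assume "s \<in> S"
      with S False have "s \<in> {A..B}" "s \<noteq> B" by (auto simp: Pset_def)
      then show "s \<in> {A..B-1}" by auto
    qed
    then have "S \<in> Pset A (B - 1) (int (Suc K))" using S by (simp add: Pset_def)
    then show ?thesis by blast
  qed
next
  fix S assume S: "S \<in> Pset A (B - 1) (int (Suc K)) \<union> insert B ` Pset A (B - 1) (int K)"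
  show "S \<in> Pset A B (int (Suc K))"
  proof (cases "S \<in> Pset A (B - 1) (int (Suc K))")
    case True then show ?thesis unfolding Pset_def by auto
  next
    case False
    then obtain T where T: "T \<in> Pset A (B - 1) (int K)" "S = insert B T" using S by auto
    then have "finite T" "B \<notin> T" unfolding Pset_def by (auto dest: finite_subset)
    then show ?thesis using T assms unfolding Pset_def by auto
  qed
qed

lemma Wc_insert:
  assumes "finite S" "\<forall>s\<in>S. s < B"
  shows "Wc \<phi> c (insert B S) = Wc \<phi> c S * \<phi> B (c - int (card S))"
proof -
  have "B \<notin> S" using assms by auto
  have n1: "Nc (insert B S) B = card S"
  proof -
    have "{t \<in> insert B S. t < B} = S" using assms by auto
    then show ?thesis by (simp add: Nc_def)
  qed
  have n2: "Nc (insert B S) s = Nc S s" if "s \<in> S" for s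
  proof -
    have "{t \<in> insert B S. t < s} = {t \<in> S. t < s}" using assms that by auto
    then show ?thesis by (simp add: Nc_def)
  qed
  have "Wc \<phi> c (insert B S) = \<phi> B (c - int (Nc (insert B S) B)) * (\<Prod>s\<in>S. \<phi> s (c - int (Nc (insert B S) s)))"
    unfolding Wc_def using assms \<open>B \<notin> S\<close> by simp
  also have "\<dots> = \<phi> B (c - int (card S)) * Wc \<phi> c S"
    unfolding Wc_def n1 by (simp add: n2 cong: prod.cong)
  finally show ?thesis by (simp add: mult.commute)
qed

lemma nat_1_int[simp]: "nat (1 + int K) = Suc K"
  by (metis nat_int of_nat_Suc)

lemma column_nat:
  fixes y z :: "int \<Rightarrow> 'a::comm_ring_1"
  shows "esup (int K) (alph y A (A + int N - 1)) (alph z (A+c) (A + int N - 1 + c - int K + 1))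
     = (\<Sum>S\<in>Pset A (A + int N - 1) (int K). Wc (\<lambda>s c. y s - z (s + c)) c S)"
proof (induction N arbitrary: K)
  case 0
  show ?case
  proof (cases K)
    case 0 then show ?thesis by (simp add: esup_ep Pset_nonpos Wc_def)
  next
    case (Suc K')
    have e: "Pset A (A - 1) (int (Suc K')) = {}" unfolding Pset_def by auto
    have "alph y A (A - 1) = []" "alph z (A + c) (A - 1 + c - int (Suc K') + 1) = []"
      by (auto intro: alph_empty)
    then show ?thesis using Suc e by (simp add: esup_ep ep_Nil_Nil)
  qed
next
  case (Suc N)
  show ?case
  proof (cases K)
    case 0 then show ?thesis by (simp add: esup_ep Pset_nonpos Wc_def)
  next
    case (Suc K')
    define B where "B = A + int N"
    have B1: "A + int (Suc N) - 1 = B" by (simp add: B_def)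
    have B2: "A + int N - 1 = B - 1" by (simp add: B_def)
    have AB: "A \<le> B" by (simp add: B_def)
    define w where "w = B + c - int K'"
    define Y' where "Y' = alph y A (B - 1)"
    have lenY: "length Y' = N" by (simp add: Y'_def length_alph B_def)
    have Y: "alph y A B = Y' @ [y B]" using AB by (simp add: Y'_def alph_snoc)
    have IH1: "esup (int (Suc K')) Y' (alph z (A + c) (w - 1)) = (\<Sum>S\<in>Pset A (B - 1) (int (Suc K')). Wc (\<lambda>s c. y s - z (s + c)) c S)"
      using Suc.IH[of "Suc K'"] unfolding B2 Y'_def w_def by (simp add: algebra_simps)
    have IH2: "esup (int K') Y' (alph z (A + c) w) = (\<Sum>S\<in>Pset A (B - 1) (int K'). Wc (\<lambda>s c. y s - z (s + c)) c S)"
      using Suc.IH[of "K'"] unfolding B2 Y'_def w_def by (simp add: algebra_simps)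
    have RHS: "(\<Sum>S\<in>Pset A B (int (Suc K')). Wc (\<lambda>s c. y s - z (s + c)) c S)
      = (\<Sum>S\<in>Pset A (B - 1) (int (Suc K')). Wc (\<lambda>s c. y s - z (s + c)) c S)
        + (y B - z w) * (\<Sum>S\<in>Pset A (B - 1) (int K'). Wc (\<lambda>s c. y s - z (s + c)) c S)"
    proof -
      have disj: "Pset A (B - 1) (int (Suc K')) \<inter> insert B ` Pset A (B - 1) (int K') = {}"
        unfolding Pset_def by auto
      have inj: "inj_on (insert B) (Pset A (B - 1) (int K'))"
      proof (rule inj_onI)
        fix S T assume "S \<in> Pset A (B - 1) (int K')" "T \<in> Pset A (B - 1) (int K')" "insert B S = insert B T"
        then have "B \<notin> S" "B \<notin> T" by (auto simp: Pset_def)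
        then show "S = T" using \<open>insert B S = insert B T\<close> by (metis Diff_insert_absorb)
      qed
      have wi: "Wc (\<lambda>s c. y s - z (s + c)) c (insert B S) = Wc (\<lambda>s c. y s - z (s + c)) c S * (y B - z w)"
        if "S \<in> Pset A (B - 1) (int K')" for S
      proof -
        have "finite S" "\<forall>s\<in>S. s < B" "int (card S) = int K'" using that unfolding Pset_def
          by (auto dest: finite_subset)
        then show ?thesis by (simp add: Wc_insert w_def algebra_simps)
      qed
      define W where "W = Wc (\<lambda>s c. y s - z (s + c)) c"
      have "(\<Sum>S\<in>Pset A B (int (Suc K')). W S) = (\<Sum>S\<in>Pset A (B - 1) (int (Suc K')). W S) + (\<Sum>S\<in>insert B ` Pset A (B - 1) (int K'). W S)"
        unfolding Pset_step[OF AB] by (rule sum.union_disjoint[OF finite_Pset finite_imageI[OF finite_Pset] disj])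
      also have "(\<Sum>S\<in>insert B ` Pset A (B - 1) (int K'). W S) = (\<Sum>S\<in>Pset A (B - 1) (int K'). W S * (y B - z w))"
        by (simp add: sum.reindex[OF inj] wi W_def)
      finally show ?thesis unfolding W_def by (simp add: sum_distrib_left mult.commute)
    qed
    show ?thesis
    proof (cases "A + c \<le> w")
      case True
      have Z: "alph z (A + c) w = alph z (A + c) (w - 1) @ [z w]" using True by (simp add: alph_snoc)
      have "esup (int K) (alph y A (A + int (Suc N) - 1)) (alph z (A + c) (A + int (Suc N) - 1 + c - int K + 1))
          = ep (Suc K') (Y' @ [y B]) (alph z (A + c) (w - 1) @ [z w])"
        unfolding B1 Y using Suc Z by (simp add: esup_ep w_def algebra_simps)
      also have "\<dots> = ep (Suc K') Y' (alph z (A + c) (w - 1) @ [z w]) + y B * ep K' Y' (alph z (A + c) (w - 1) @ [z w])"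
        by (rule ep_snocX)
      also have "\<dots> = ep (Suc K') Y' (alph z (A + c) (w - 1)) - z w * ep K' Y' (alph z (A + c) (w - 1) @ [z w]) + y B * ep K' Y' (alph z (A + c) (w - 1) @ [z w])"
        by (simp only: ep_snocW)
      also have "\<dots> = esup (int (Suc K')) Y' (alph z (A + c) (w - 1)) + (y B - z w) * esup (int K') Y' (alph z (A + c) w)"
        unfolding Z by (simp add: esup_ep algebra_simps)
      finally show ?thesis using RHS IH1 IH2 Suc unfolding B1 by simp
    next
      case False
      have Z1: "alph z (A + c) w = []" "alph z (A + c) (w - 1) = []" using False by (auto intro: alph_empty)
      have big: "ep K' Y' [] = 0" using False lenY by (intro ep_big_Nil) (simp add: w_def B_def)
      have "esup (int K) (alph y A (A + int (Suc N) - 1)) (alph z (A + c) (A + int (Suc N) - 1 + c - int K + 1))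
          = ep (Suc K') (Y' @ [y B]) []"
        unfolding B1 Y using Suc Z1 by (simp add: esup_ep w_def algebra_simps)
      also have "\<dots> = esup (int (Suc K')) Y' (alph z (A + c) (w - 1)) + (y B - z w) * esup (int K') Y' (alph z (A + c) w)"
        unfolding ep_snocX Z1 by (simp add: esup_ep big)
      finally show ?thesis using RHS IH1 IH2 Suc unfolding B1 by simp
    qed
  qed
qed

lemma column:
  fixes y z :: "int \<Rightarrow> 'a::comm_ring_1"
  shows "esup k (alph y A B) (alph z (A+c) (B + c - k + 1))
     = (\<Sum>S\<in>Pset A B k. Wc (\<lambda>s c. y s - z (s + c)) c S)"
proof (cases "k < 0")
  case True then show ?thesis by (simp add: esup_ep Pset_nonpos)
next
  case False
  then obtain K where K: "k = int K" by (metis nonneg_int_cases not_less)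
  show ?thesis
  proof (cases "A - 1 \<le> B")
    case True
    define N where "N = nat (B - A + 1)"
    have "B = A + int N - 1" using True by (simp add: N_def)
    then show ?thesis using column_nat[of K y A N z c] K by simp
  next
    case False
    show ?thesis
    proof (cases K)
      case 0 then show ?thesis using K by (simp add: esup_ep Pset_nonpos Wc_def)
    next
      case (Suc K')
      have e: "Pset A B k = {}" using False K Suc unfolding Pset_def by auto
      have "alph y A B = []" "alph z (A + c) (B + c - k + 1) = []"
        using False K by (auto intro: alph_empty)
      then show ?thesis using Suc e K by (simp add: esup_ep ep_Nil_Nil)
    qed
  qed
qed

definition lo :: "int \<Rightarrow> int set \<Rightarrow> int set" where "lo v X = {s\<in>X. s < v}"
definition hi :: "int \<Rightarrow> int set \<Rightarrow> int set" where "hi v X = {s\<in>X. v \<le> s}"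

lemma Nc_lohi_le:
  assumes "v \<le> v0"
  shows "Nc (lo v0 X \<union> hi v0 Y) v = Nc X v"
proof -
  have "{t \<in> lo v0 X \<union> hi v0 Y. t < v} = {t\<in>X. t < v}" using assms by (auto simp: lo_def hi_def)
  then show ?thesis by (simp add: Nc_def)
qed

lemma Nc_split:
  assumes "finite Y" "v0 \<le> s"
  shows "int (Nc Y s) = int (Nc Y v0) + int (card {t\<in>Y. v0 \<le> t \<and> t < s})"
proof -
  have "{t\<in>Y. t < s} = {t\<in>Y. t < v0} \<union> {t\<in>Y. v0 \<le> t \<and> t < s}" using assms by auto
  moreover have "{t\<in>Y. t < v0} \<inter> {t\<in>Y. v0 \<le> t \<and> t < s} = {}" by auto
  ultimately have "card {t\<in>Y. t < s} = card {t\<in>Y. t < v0} + card {t\<in>Y. v0 \<le> t \<and> t < s}"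
    using assms by (simp add: card_Un_disjoint)
  then show ?thesis by (simp add: Nc_def)
qed

lemma Nc_lohi_ge:
  assumes "finite X" "finite Y" "v0 \<le> s"
  shows "int (Nc (lo v0 X \<union> hi v0 Y) s) = int (Nc X v0) + int (Nc Y s) - int (Nc Y v0)"
proof -
  have "{t \<in> lo v0 X \<union> hi v0 Y. t < s} = lo v0 X \<union> {t\<in>Y. v0 \<le> t \<and> t < s}"
    using assms by (auto simp: lo_def hi_def)
  moreover have "lo v0 X \<inter> {t\<in>Y. v0 \<le> t \<and> t < s} = {}" by (auto simp: lo_def)
  ultimately have "Nc (lo v0 X \<union> hi v0 Y) s = card (lo v0 X) + card {t\<in>Y. v0 \<le> t \<and> t < s}"
    using assms by (simp add: Nc_def card_Un_disjoint lo_def)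
  moreover have "card (lo v0 X) = Nc X v0" by (simp add: lo_def Nc_def)
  ultimately show ?thesis using Nc_split[OF assms(2,3)] by simp
qed

definition LO :: "(int \<Rightarrow> int \<Rightarrow> 'a::comm_ring_1) \<Rightarrow> int \<Rightarrow> int \<Rightarrow> int set \<Rightarrow> 'a" where
  "LO \<phi> v0 c X = (\<Prod>s\<in>lo v0 X. \<phi> s (c - int (Nc X s)))"
definition HI :: "(int \<Rightarrow> int \<Rightarrow> 'a::comm_ring_1) \<Rightarrow> int \<Rightarrow> int \<Rightarrow> int set \<Rightarrow> 'a" where
  "HI \<phi> v0 c X = (\<Prod>s\<in>hi v0 X. \<phi> s (c - int (Nc X s)))"

lemma Wc_LOHI:
  assumes "finite X"
  shows "Wc \<phi> c X = LO \<phi> v0 c X * HI \<phi> v0 c X"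
proof -
  have "X = lo v0 X \<union> hi v0 X" by (auto simp: lo_def hi_def)
  moreover have "lo v0 X \<inter> hi v0 X = {}" by (auto simp: lo_def hi_def)
  moreover have "finite (lo v0 X)" "finite (hi v0 X)" using assms by (auto simp: lo_def hi_def)
  ultimately show ?thesis unfolding Wc_def LO_def HI_def
    by (metis prod.union_disjoint)
qed

lemma Wc_swap:
  assumes "finite X" "finite Y" "c1 - int (Nc X v0) = c2 - int (Nc Y v0)"
  shows "Wc \<phi> c1 (lo v0 X \<union> hi v0 Y) = LO \<phi> v0 c1 X * HI \<phi> v0 c2 Y"
proof -
  have d: "lo v0 X \<inter> hi v0 Y = {}" by (auto simp: lo_def hi_def)
  have f: "finite (lo v0 X)" "finite (hi v0 Y)" using assms by (auto simp: lo_def hi_def)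
  have 1: "(\<Prod>s\<in>lo v0 X. \<phi> s (c1 - int (Nc (lo v0 X \<union> hi v0 Y) s))) = LO \<phi> v0 c1 X"
    unfolding LO_def
  proof (intro prod.cong refl)
    fix s assume "s \<in> lo v0 X"
    then have "s \<le> v0" by (simp add: lo_def)
    then show "\<phi> s (c1 - int (Nc (lo v0 X \<union> hi v0 Y) s)) = \<phi> s (c1 - int (Nc X s))"
      by (simp add: Nc_lohi_le)
  qed
  have 2: "(\<Prod>s\<in>hi v0 Y. \<phi> s (c1 - int (Nc (lo v0 X \<union> hi v0 Y) s))) = HI \<phi> v0 c2 Y"
    unfolding HI_def
  proof (intro prod.cong refl)
    fix s assume "s \<in> hi v0 Y"
    then have "v0 \<le> s" by (simp add: hi_def)
    have e: "int (Nc (lo v0 X \<union> hi v0 Y) s) = int (Nc X v0) + int (Nc Y s) - int (Nc Y v0)"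
      using Nc_lohi_ge[OF assms(1,2) \<open>v0 \<le> s\<close>] .
    have "c1 - int (Nc (lo v0 X \<union> hi v0 Y) s) = c2 - int (Nc Y s)"
      unfolding e using assms(3) by linarith
    then show "\<phi> s (c1 - int (Nc (lo v0 X \<union> hi v0 Y) s)) = \<phi> s (c2 - int (Nc Y s))"
      by simp
  qed
  show ?thesis unfolding Wc_def prod.union_disjoint[OF f d] 1 2 ..
qed

locale lgv =
  fixes n :: nat and ct cb a b :: "nat \<Rightarrow> int" and \<phi> :: "int \<Rightarrow> int \<Rightarrow> 'a::comm_ring_1"
begin

definition paths :: "nat \<Rightarrow> nat \<Rightarrow> int set set" where
  "paths j i = Pset (a j) (b i) (ct j - cb i + 1)"

definition Fam :: "((nat \<Rightarrow> nat) \<times> (nat \<Rightarrow> int set)) set" where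
  "Fam = Sigma {\<sigma>. \<sigma> permutes {0..<n}} (\<lambda>\<sigma>. PiE {0..<n} (\<lambda>i. paths (\<sigma> i) i))"

definition wt :: "(nat \<Rightarrow> nat) \<times> (nat \<Rightarrow> int set) \<Rightarrow> 'a" where
  "wt F = signof (fst F) * (\<Prod>i=0..<n. Wc \<phi> (ct (fst F i)) (snd F i))"

definition rv :: "(nat \<Rightarrow> nat) \<Rightarrow> nat \<Rightarrow> int \<Rightarrow> bool" where
  "rv \<sigma> i v \<longleftrightarrow> a (\<sigma> i) \<le> v \<and> v \<le> b i + 1"

definition pos :: "(nat \<Rightarrow> nat) \<Rightarrow> (nat \<Rightarrow> int set) \<Rightarrow> nat \<Rightarrow> int \<Rightarrow> int" where
  "pos \<sigma> S i v = ct (\<sigma> i) - int (Nc (S i) v)"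

definition sh :: "(nat \<Rightarrow> nat) \<Rightarrow> (nat \<Rightarrow> int set) \<Rightarrow> int \<Rightarrow> nat \<Rightarrow> nat \<Rightarrow> bool" where
  "sh \<sigma> S v p q \<longleftrightarrow> p \<noteq> q \<and> p < n \<and> q < n \<and> rv \<sigma> p v \<and> rv \<sigma> q v \<and> pos \<sigma> S p v = pos \<sigma> S q v"

definition Vs :: "(nat \<Rightarrow> nat) \<Rightarrow> (nat \<Rightarrow> int set) \<Rightarrow> int set" where
  "Vs \<sigma> S = {v. \<exists>p q. sh \<sigma> S v p q}"

definition vst where "vst \<sigma> S = Min (Vs \<sigma> S)"
definition ist where "ist \<sigma> S = Min {p. \<exists>q. sh \<sigma> S (vst \<sigma> S) p q}"
definition jst where "jst \<sigma> S = Min {q. sh \<sigma> S (vst \<sigma> S) (ist \<sigma> S) q}"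

definition swp :: "int \<Rightarrow> nat \<Rightarrow> nat \<Rightarrow> (nat \<Rightarrow> nat) \<Rightarrow> (nat \<Rightarrow> int set) \<Rightarrow> (nat \<Rightarrow> nat) \<times> (nat \<Rightarrow> int set)" where
  "swp v i j \<sigma> S = (\<sigma> \<circ> transpose i j, S(i := lo v (S j) \<union> hi v (S i), j := lo v (S i) \<union> hi v (S j)))"

definition iota :: "(nat \<Rightarrow> nat) \<times> (nat \<Rightarrow> int set) \<Rightarrow> (nat \<Rightarrow> nat) \<times> (nat \<Rightarrow> int set)" where
  "iota F = swp (vst (fst F) (snd F)) (ist (fst F) (snd F)) (jst (fst F) (snd F)) (fst F) (snd F)"

lemma finite_Vs: "finite (Vs \<sigma> S)"
proof -
  have "Vs \<sigma> S \<subseteq> (\<Union>p<n. {a (\<sigma> p)..b p + 1})"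
    unfolding Vs_def sh_def rv_def by auto
  then show ?thesis by (rule finite_subset) auto
qed

lemma sh_sym: "sh \<sigma> S v p q \<longleftrightarrow> sh \<sigma> S v q p"
  unfolding sh_def by auto

lemma choice_props:
  assumes "Vs \<sigma> S \<noteq> {}"
  shows "sh \<sigma> S (vst \<sigma> S) (ist \<sigma> S) (jst \<sigma> S)"
    and "\<And>v. v < vst \<sigma> S \<Longrightarrow> v \<notin> Vs \<sigma> S"
proof -
  have v: "vst \<sigma> S \<in> Vs \<sigma> S" unfolding vst_def using finite_Vs assms by (rule Min_in)
  have "{p. \<exists>q. sh \<sigma> S (vst \<sigma> S) p q} \<noteq> {}" using v unfolding Vs_def by auto
  moreover have "finite {p. \<exists>q. sh \<sigma> S (vst \<sigma> S) p q}"
    by (rule finite_subset[of _ "{..<n}"]) (auto simp: sh_def)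
  ultimately have "ist \<sigma> S \<in> {p. \<exists>q. sh \<sigma> S (vst \<sigma> S) p q}" unfolding ist_def by (metis Min_in)
  then have "{q. sh \<sigma> S (vst \<sigma> S) (ist \<sigma> S) q} \<noteq> {}" by auto
  moreover have "finite {q. sh \<sigma> S (vst \<sigma> S) (ist \<sigma> S) q}"
    by (rule finite_subset[of _ "{..<n}"]) (auto simp: sh_def)
  ultimately have "jst \<sigma> S \<in> {q. sh \<sigma> S (vst \<sigma> S) (ist \<sigma> S) q}" unfolding jst_def by (metis Min_in)
  then show "sh \<sigma> S (vst \<sigma> S) (ist \<sigma> S) (jst \<sigma> S)" by simp
  show "\<And>v. v < vst \<sigma> S \<Longrightarrow> v \<notin> Vs \<sigma> S"
    using Min_le[OF finite_Vs] unfolding vst_def by force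
qed

lemma Fam_finite_paths:
  assumes "(\<sigma>, S) \<in> Fam" "p < n"
  shows "finite (S p)"
  using assms unfolding Fam_def paths_def Pset_def by (auto dest: finite_subset)

lemma swp_data:
  assumes F: "(\<sigma>, S) \<in> Fam" and sh: "sh \<sigma> S v0 i j" and v: "v \<le> v0" and p: "p < n"
    and sw: "swp v0 i j \<sigma> S = (\<sigma>', S')"
  shows "rv \<sigma>' p v = rv \<sigma> (transpose i j p) v" and "pos \<sigma>' S' p v = pos \<sigma> S (transpose i j p) v"
proof -
  have ij: "i \<noteq> j" "i < n" "j < n" "rv \<sigma> i v0" "rv \<sigma> j v0" using sh by (auto simp: sh_def)
  have \<sigma>': "\<sigma>' = \<sigma> \<circ> transpose i j" and S': "S' = S(i := lo v0 (S j) \<union> hi v0 (S i), j := lo v0 (S i) \<union> hi v0 (S j))"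
    using sw by (auto simp: swp_def)
  show "rv \<sigma>' p v = rv \<sigma> (transpose i j p) v"
    using ij v unfolding \<sigma>' rv_def by (auto simp: transpose_def)
  show "pos \<sigma>' S' p v = pos \<sigma> S (transpose i j p) v"
    using ij v unfolding \<sigma>' S' pos_def by (auto simp: transpose_def Nc_lohi_le)
qed

lemma swp_data_eq:
  assumes sh: "sh \<sigma> S v0 i j"
  shows "rv \<sigma> (transpose i j p) v0 = rv \<sigma> p v0" and "pos \<sigma> S (transpose i j p) v0 = pos \<sigma> S p v0"
  using sh by (auto simp: sh_def transpose_def)

lemma swp_Fam:
  assumes F: "(\<sigma>, S) \<in> Fam" and sh: "sh \<sigma> S v0 i j"
  shows "swp v0 i j \<sigma> S \<in> Fam"
proof -
  have ij: "i \<noteq> j" "i < n" "j < n" "rv \<sigma> i v0" "rv \<sigma> j v0" "pos \<sigma> S i v0 = pos \<sigma> S j v0"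
    using sh by (auto simp: sh_def)
  have perm: "\<sigma> permutes {0..<n}" and SP: "S \<in> PiE {0..<n} (\<lambda>i. paths (\<sigma> i) i)" using F by (auto simp: Fam_def)
  have fin: "finite (S i)" "finite (S j)" using Fam_finite_paths[OF F] ij by auto
  have new: "lo v0 (S k) \<union> hi v0 (S l) \<in> paths (\<sigma> k) l"
    if kl: "(k = i \<and> l = j) \<or> (k = j \<and> l = i)" for k l
  proof -
    have kl': "k < n" "l < n" "rv \<sigma> k v0" "rv \<sigma> l v0" "pos \<sigma> S k v0 = pos \<sigma> S l v0" "finite (S k)" "finite (S l)"
      using kl ij fin by auto
    have Sk: "S k \<in> paths (\<sigma> k) k" and Sl: "S l \<in> paths (\<sigma> l) l" using SP kl' by auto
    have sub: "lo v0 (S k) \<union> hi v0 (S l) \<subseteq> {a (\<sigma> k)..b l}"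
      using Sk Sl kl'(3,4) unfolding paths_def Pset_def lo_def hi_def rv_def by force
    have disj: "lo v0 (S k) \<inter> hi v0 (S l) = {}" by (auto simp: lo_def hi_def)
    have c1: "card (lo v0 (S k)) = Nc (S k) v0" by (simp add: lo_def Nc_def)
    have c2: "int (card (hi v0 (S l))) = int (card (S l)) - int (Nc (S l) v0)"
    proof -
      have "S l = lo v0 (S l) \<union> hi v0 (S l)" "lo v0 (S l) \<inter> hi v0 (S l) = {}" by (auto simp: lo_def hi_def)
      then have "card (S l) = card (lo v0 (S l)) + card (hi v0 (S l))"
        using kl'(7) by (metis card_Un_disjoint finite_Un)
      then show ?thesis by (simp add: lo_def Nc_def)
    qed
    have "int (card (lo v0 (S k) \<union> hi v0 (S l))) = int (Nc (S k) v0) + int (card (S l)) - int (Nc (S l) v0)"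
      using disj kl' c1 c2 by (simp add: card_Un_disjoint lo_def hi_def)
    also have "\<dots> = ct (\<sigma> k) - cb l + 1"
      using Sl kl'(5) unfolding paths_def Pset_def pos_def by simp
    finally show ?thesis using sub unfolding paths_def Pset_def by simp
  qed
  have "\<sigma> \<circ> transpose i j permutes {0..<n}"
    using perm ij by (intro permutes_compose permutes_swap_id) auto
  moreover have "S(i := lo v0 (S j) \<union> hi v0 (S i), j := lo v0 (S i) \<union> hi v0 (S j)) \<in> PiE {0..<n} (\<lambda>p. paths ((\<sigma> \<circ> transpose i j) p) p)"
    using SP ij new by (auto simp: PiE_def Pi_def extensional_def transpose_def)
  ultimately show ?thesis by (simp add: swp_def Fam_def)
qed

lemma lohi_simps[simp]:
  "lo v (lo v X \<union> hi v Y) = lo v X" "hi v (lo v X \<union> hi v Y) = hi v Y" "lo v X \<union> hi v X = X"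
  by (auto simp: lo_def hi_def)

lemma sh_swp:
  assumes F: "(\<sigma>, S) \<in> Fam" and sh: "sh \<sigma> S v0 i j" and v: "v \<le> v0"
    and sw: "swp v0 i j \<sigma> S = (\<sigma>', S')"
  shows "sh \<sigma>' S' v p q \<longleftrightarrow> sh \<sigma> S v (transpose i j p) (transpose i j q)"
proof -
  have ij: "i < n" "j < n" using sh by (auto simp: sh_def)
  have tn: "transpose i j p < n \<longleftrightarrow> p < n" for p using ij by (auto simp: transpose_def)
  have tinj: "transpose i j p = transpose i j q \<longleftrightarrow> p = q" for p q by (auto simp: transpose_def split: if_splits)
  show ?thesis
  proof
    assume "sh \<sigma>' S' v p q"
    then show "sh \<sigma> S v (transpose i j p) (transpose i j q)"
      using swp_data[OF F sh v _ sw, of p] swp_data[OF F sh v _ sw, of q] tn tinj by (auto simp: sh_def)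
  next
    assume "sh \<sigma> S v (transpose i j p) (transpose i j q)"
    then show "sh \<sigma>' S' v p q"
      using swp_data[OF F sh v _ sw, of p] swp_data[OF F sh v _ sw, of q] tn tinj
      unfolding sh_def by (metis tn)
  qed
qed

lemma sh_swp_v0:
  assumes F: "(\<sigma>, S) \<in> Fam" and sh: "sh \<sigma> S v0 i j"
    and sw: "swp v0 i j \<sigma> S = (\<sigma>', S')"
  shows "sh \<sigma>' S' v0 p q \<longleftrightarrow> sh \<sigma> S v0 p q"
proof -
  have ij: "i < n" "j < n" "i \<noteq> j" using sh by (auto simp: sh_def)
  have tn: "transpose i j p < n \<longleftrightarrow> p < n" for p using ij by (auto simp: transpose_def)
  have tinj: "transpose i j p = transpose i j q \<longleftrightarrow> p = q" for p q by (auto simp: transpose_def split: if_splits)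
  have "sh \<sigma> S v0 (transpose i j p) (transpose i j q) \<longleftrightarrow> sh \<sigma> S v0 p q"
    unfolding sh_def by (simp only: swp_data_eq[OF sh] tn tinj)
  then show ?thesis using sh_swp[OF F sh order_refl sw] by simp
qed

lemma iota_choice:
  assumes F: "(\<sigma>, S) \<in> Fam" and B: "Vs \<sigma> S \<noteq> {}"
    and sw: "iota (\<sigma>, S) = (\<sigma>', S')"
  shows "Vs \<sigma>' S' \<noteq> {}" "vst \<sigma>' S' = vst \<sigma> S" "ist \<sigma>' S' = ist \<sigma> S" "jst \<sigma>' S' = jst \<sigma> S"
proof -
  define v0 i j where "v0 = vst \<sigma> S" and "i = ist \<sigma> S" and "j = jst \<sigma> S"
  have sh: "sh \<sigma> S v0 i j" and below: "\<And>v. v < v0 \<Longrightarrow> v \<notin> Vs \<sigma> S"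
    using choice_props[OF B] unfolding v0_def i_def j_def by auto
  have sw': "swp v0 i j \<sigma> S = (\<sigma>', S')" using sw by (simp add: iota_def v0_def i_def j_def)
  have sh': "sh \<sigma>' S' v0 i j" using sh_swp_v0[OF F sh sw'] sh by simp
  then show "Vs \<sigma>' S' \<noteq> {}" by (auto simp: Vs_def)
  have "vst \<sigma>' S' = v0" unfolding vst_def
  proof (rule Min_eqI[OF finite_Vs])
    show "v0 \<in> Vs \<sigma>' S'" using sh' by (auto simp: Vs_def)
    fix v assume "v \<in> Vs \<sigma>' S'"
    then obtain p q where pq: "sh \<sigma>' S' v p q" by (auto simp: Vs_def)
    show "v0 \<le> v"
    proof (rule ccontr)
      assume "\<not> v0 \<le> v"
      then have "v < v0" by simp
      then have "sh \<sigma> S v (transpose i j p) (transpose i j q)"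
        using sh_swp[OF F sh _ sw'] pq by simp
      then have "v \<in> Vs \<sigma> S" by (auto simp: Vs_def)
      then show False using below \<open>v < v0\<close> by blast
    qed
  qed
  then show "vst \<sigma>' S' = vst \<sigma> S" by (simp add: v0_def)
  have e1: "{p. \<exists>q. sh \<sigma>' S' v0 p q} = {p. \<exists>q. sh \<sigma> S v0 p q}" using sh_swp_v0[OF F sh sw'] by blast
  have e2: "{q. sh \<sigma>' S' v0 i q} = {q. sh \<sigma> S v0 i q}" using sh_swp_v0[OF F sh sw'] by blast
  show "ist \<sigma>' S' = ist \<sigma> S" unfolding ist_def \<open>vst \<sigma>' S' = vst \<sigma> S\<close> using e1 by (simp add: v0_def)
  then show "jst \<sigma>' S' = jst \<sigma> S" unfolding jst_def \<open>vst \<sigma>' S' = vst \<sigma> S\<close> using e2 by (simp add: v0_def i_def)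
qed

lemma prod_two:
  assumes "finite A" "i \<in> A" "j \<in> A" "i \<noteq> j"
  shows "prod g A = g i * g j * prod g (A - {i, j})"
proof -
  have "A = insert i (insert j (A - {i, j}))" using assms by auto
  then have "prod g A = prod g (insert i (insert j (A - {i, j})))" by simp
  also have "\<dots> = g i * (g j * prod g (A - {i, j}))" using assms by simp
  finally show ?thesis by (simp add: mult.assoc)
qed

lemma iota_props:
  assumes F: "(\<sigma>, S) \<in> Fam" and B: "Vs \<sigma> S \<noteq> {}"
  shows "iota (\<sigma>, S) \<in> Fam" "iota (iota (\<sigma>, S)) = (\<sigma>, S)" "wt (iota (\<sigma>, S)) = - wt (\<sigma>, S)"
    "iota (\<sigma>, S) \<noteq> (\<sigma>, S)" "Vs (fst (iota (\<sigma>, S))) (snd (iota (\<sigma>, S))) \<noteq> {}"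
proof -
  define v0 i j where "v0 = vst \<sigma> S" and "i = ist \<sigma> S" and "j = jst \<sigma> S"
  have sh: "sh \<sigma> S v0 i j"
    using choice_props[OF B] unfolding v0_def i_def j_def by auto
  have ij: "i \<noteq> j" "i < n" "j < n" "pos \<sigma> S i v0 = pos \<sigma> S j v0" using sh by (auto simp: sh_def)
  obtain \<sigma>' S' where sw: "iota (\<sigma>, S) = (\<sigma>', S')" by (cases "iota (\<sigma>, S)") auto
  have sw': "swp v0 i j \<sigma> S = (\<sigma>', S')" using sw by (simp add: iota_def v0_def i_def j_def)
  have \<sigma>': "\<sigma>' = \<sigma> \<circ> transpose i j" and S': "S' = S(i := lo v0 (S j) \<union> hi v0 (S i), j := lo v0 (S i) \<union> hi v0 (S j))"
    using sw' by (auto simp: swp_def)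
  show F': "iota (\<sigma>, S) \<in> Fam" using swp_Fam[OF F sh] sw sw' by simp
  note ch = iota_choice[OF F B sw]
  show "Vs (fst (iota (\<sigma>, S))) (snd (iota (\<sigma>, S))) \<noteq> {}" using ch sw by simp
  have "iota (\<sigma>', S') = swp v0 i j \<sigma>' S'" using ch by (simp add: iota_def v0_def i_def j_def)
  also have "\<dots> = (\<sigma>, S)"
    unfolding swp_def \<sigma>' S' using ij by (auto simp: fun_eq_iff transpose_def)
  finally show "iota (iota (\<sigma>, S)) = (\<sigma>, S)" using sw by simp
  have perm: "\<sigma> permutes {0..<n}" using F by (simp add: Fam_def)
  have inj: "\<sigma> i \<noteq> \<sigma> j" using perm ij by (metis permutes_inj injD)
  then have "\<sigma>' \<noteq> \<sigma>" unfolding \<sigma>' by (metis comp_apply transpose_apply_first)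
  then show "iota (\<sigma>, S) \<noteq> (\<sigma>, S)" using sw by simp
  have sg: "signof \<sigma>' = - (signof \<sigma> :: 'a)"
  proof -
    have "sign \<sigma>' = sign \<sigma> * sign (transpose i j)"
      unfolding \<sigma>' by (rule sign_compose) (auto intro: permutes_imp_permutation[OF _ perm] permutation_swap_id)
    then show ?thesis using ij by (simp add: sign_swap_id)
  qed
  have fin: "finite (S i)" "finite (S j)" using Fam_finite_paths[OF F] ij by auto
  have pe: "ct (\<sigma> j) - int (Nc (S j) v0) = ct (\<sigma> i) - int (Nc (S i) v0)" using ij by (simp add: pos_def)
  have gi: "Wc \<phi> (ct (\<sigma>' i)) (S' i) = LO \<phi> v0 (ct (\<sigma> j)) (S j) * HI \<phi> v0 (ct (\<sigma> i)) (S i)"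
    unfolding \<sigma>' S' using ij fin pe by (simp add: Wc_swap)
  have gj: "Wc \<phi> (ct (\<sigma>' j)) (S' j) = LO \<phi> v0 (ct (\<sigma> i)) (S i) * HI \<phi> v0 (ct (\<sigma> j)) (S j)"
    unfolding \<sigma>' S' using ij fin pe by (simp add: Wc_swap)
  have rest: "(\<Prod>p\<in>{0..<n} - {i, j}. Wc \<phi> (ct (\<sigma>' p)) (S' p)) = (\<Prod>p\<in>{0..<n} - {i, j}. Wc \<phi> (ct (\<sigma> p)) (S p))"
    unfolding \<sigma>' S' by (intro prod.cong refl) (auto simp: transpose_def)
  have A: "prod g {0..<n} = g i * g j * prod g ({0..<n} - {i,j})" for g :: "nat \<Rightarrow> 'a"
    by (rule prod_two) (use ij in auto)
  have "(\<Prod>p=0..<n. Wc \<phi> (ct (\<sigma>' p)) (S' p)) = Wc \<phi> (ct (\<sigma>' i)) (S' i) * Wc \<phi> (ct (\<sigma>' j)) (S' j) * (\<Prod>p\<in>{0..<n} - {i, j}. Wc \<phi> (ct (\<sigma>' p)) (S' p))"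
    by (rule A)
  also have "\<dots> = Wc \<phi> (ct (\<sigma> i)) (S i) * Wc \<phi> (ct (\<sigma> j)) (S j) * (\<Prod>p\<in>{0..<n} - {i, j}. Wc \<phi> (ct (\<sigma> p)) (S p))"
    unfolding rest gi gj by (simp add: Wc_LOHI[OF fin(1), of _ _ v0] Wc_LOHI[OF fin(2), of _ _ v0] algebra_simps)
  also have "\<dots> = (\<Prod>p=0..<n. Wc \<phi> (ct (\<sigma> p)) (S p))" by (rule A[symmetric])
  finally have "(\<Prod>p=0..<n. Wc \<phi> (ct (\<sigma>' p)) (S' p)) = (\<Prod>p=0..<n. Wc \<phi> (ct (\<sigma> p)) (S p))" .
  then show "wt (iota (\<sigma>, S)) = - wt (\<sigma>, S)" unfolding sw wt_def using sg by simp
qed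

lemma Bad_sum_zero:
  "(\<Sum>F\<in>{F\<in>Fam. Vs (fst F) (snd F) \<noteq> {}}. wt F) = 0"
proof (rule sum_involution_eq_0[where h = iota])
  fix F assume "F \<in> {F\<in>Fam. Vs (fst F) (snd F) \<noteq> {}}"
  moreover obtain \<sigma> S where "F = (\<sigma>, S)" by (cases F)
  ultimately have F: "(\<sigma>, S) \<in> Fam" "Vs \<sigma> S \<noteq> {}" by auto
  note P = iota_props[OF F]
  show "wt (iota F) + wt F = 0" using P \<open>F = (\<sigma>, S)\<close> by simp
  show "iota F \<in> {F\<in>Fam. Vs (fst F) (snd F) \<noteq> {}}" using P \<open>F = (\<sigma>, S)\<close> by simp
  show "iota (iota F) = F" using P \<open>F = (\<sigma>, S)\<close> by simp
  show "iota F \<noteq> F" using P \<open>F = (\<sigma>, S)\<close> by simp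
qed

end

lemma Nc_step:
  assumes "finite X"
  shows "Nc X (v + 1) = Nc X v + (if v \<in> X then 1 else 0)"
proof -
  have "{t\<in>X. t < v + 1} = {t\<in>X. t < v} \<union> (if v \<in> X then {v} else {})" by (auto simp: order.order_iff_strict)
  moreover have "finite {t\<in>X. t < v}" using assms by auto
  ultimately show ?thesis unfolding Nc_def by (auto simp: card_insert_if)
qed

lemma Nc_le_card: "finite X \<Longrightarrow> Nc X v \<le> card X"
  unfolding Nc_def by (intro card_mono) auto

lemma Nc_zero: "(\<forall>t\<in>X. v \<le> t) \<Longrightarrow> Nc X v = 0"
proof -
  assume "\<forall>t\<in>X. v \<le> t"
  then have E: "{t \<in> X. t < v} = {}" by force
  show ?thesis unfolding Nc_def E by simp
qed

lemma Nc_full: "(\<forall>t\<in>X. t < v) \<Longrightarrow> Nc X v = card X"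
proof -
  assume "\<forall>t\<in>X. t < v"
  then have E: "{t \<in> X. t < v} = X" by force
  show ?thesis unfolding Nc_def E by simp
qed

lemma Nc_bound_lo:
  assumes "X \<subseteq> {A..B}"
  shows "int (Nc X v) \<le> max 0 (v - A)"
proof -
  have "{t\<in>X. t < v} \<subseteq> {A..v-1}" using assms by auto
  then have "card {t\<in>X. t < v} \<le> card {A..v-1}" by (intro card_mono) auto
  then show ?thesis unfolding Nc_def by simp
qed

lemma Nc_bound_hi:
  assumes "finite X" "X \<subseteq> {A..B}"
  shows "int (card X) - int (Nc X v) \<le> max 0 (B - v + 1)"
proof -
  have "X = {t\<in>X. t < v} \<union> {t\<in>X. v \<le> t}" "{t\<in>X. t < v} \<inter> {t\<in>X. v \<le> t} = {}" by auto
  then have "card X = Nc X v + card {t\<in>X. v \<le> t}" unfolding Nc_def using assms(1)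
    by (metis (no_types, lifting) card_Un_disjoint finite_Un)
  moreover have "{t\<in>X. v \<le> t} \<subseteq> {v..B}" using assms by auto
  then have "card {t\<in>X. v \<le> t} \<le> card {v..B}" by (intro card_mono) auto
  ultimately show ?thesis by simp
qed

lemma Nc_mono: "finite X \<Longrightarrow> v \<le> w \<Longrightarrow> Nc X v \<le> Nc X w"
  unfolding Nc_def by (intro card_mono) auto

lemma int_ivt:
  fixes g :: "int \<Rightarrow> int"
  assumes step: "\<And>v. \<bar>g (v + 1) - g v\<bar> \<le> 1" and "l0 \<le> h0" "g l0 \<le> 0" "0 \<le> g h0"
  shows "\<exists>v. l0 \<le> v \<and> v \<le> h0 \<and> g v = 0"
  using assms(2-4)
proof (induction "nat (h0 - l0)" arbitrary: l0)
  case 0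
  then have "l0 = h0" by simp
  then show ?case using 0 by auto
next
  case (Suc k)
  show ?case
  proof (cases "g l0 = 0")
    case True then show ?thesis using Suc.prems by auto
  next
    case False
    then have "g l0 < 0" using Suc.prems by simp
    then have "g (l0 + 1) \<le> 0" using step[of l0] by simp
    moreover have "k = nat (h0 - (l0 + 1))" "l0 + 1 \<le> h0" using Suc.hyps(2) Suc.prems \<open>g l0 < 0\<close> by auto
    ultimately obtain v where "l0 + 1 \<le> v" "v \<le> h0" "g v = 0" using Suc.hyps(1)[of "l0+1"] Suc.prems by blast
    then show ?thesis by (intro exI[of _ v]) auto
  qed
qed

lemma crossing:
  fixes a1 a2 b1 b2 c1 c2 d1 d2 :: int
  assumes X1: "X1 \<in> Pset a1 b1 (c1 - d1 + 1)" and X2: "X2 \<in> Pset a2 b2 (c2 - d2 + 1)"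
    and cc: "c1 < c2" and ha: "a1 - a2 \<le> c2 - c1"
    and hb: "(d1 < d2 \<and> b1 - b2 \<le> d2 - d1) \<or> (d2 < d1 \<and> b2 - b1 \<le> d1 - d2)"
    and v0: "c1 - int (Nc X1 v0) \<ge> c2 - int (Nc X2 v0)"
  shows "\<exists>v. a1 \<le> v \<and> v \<le> b1 + 1 \<and> a2 \<le> v \<and> v \<le> b2 + 1 \<and> c1 - int (Nc X1 v) = c2 - int (Nc X2 v)"
proof -
  have s1: "X1 \<subseteq> {a1..b1}" "int (card X1) = c1 - d1 + 1" and s2: "X2 \<subseteq> {a2..b2}" "int (card X2) = c2 - d2 + 1"
    using X1 X2 by (auto simp: Pset_def)
  have f1: "finite X1" and f2: "finite X2" using s1 s2 by (auto dest: finite_subset)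
  have m1: "\<forall>t\<in>X1. a1 \<le> t \<and> t \<le> b1" using s1(1) by force
  have m2: "\<forall>t\<in>X2. a2 \<le> t \<and> t \<le> b2" using s2(1) by force
  define g where "g v = (c1 - int (Nc X1 v)) - (c2 - int (Nc X2 v))" for v
  have step: "\<bar>g (v + 1) - g v\<bar> \<le> 1" for v
    unfolding g_def using Nc_step[OF f1, of v] Nc_step[OF f2, of v] by auto
  define vl where "vl = min a1 a2 - 1"
  have N1lo: "Nc X1 vl = 0" unfolding vl_def using m1 by (intro Nc_zero) auto
  have N2lo: "Nc X2 vl = 0" unfolding vl_def using m2 by (intro Nc_zero) auto
  have glo: "g vl \<le> 0" using cc by (simp add: g_def N1lo N2lo)
  have "vl \<le> v0"
  proof (rule ccontr)
    assume "\<not> vl \<le> v0"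
    then have "Nc X1 v0 = 0" "Nc X2 v0 = 0" using m1 m2 by (auto intro!: Nc_zero simp: vl_def)
    then show False using v0 cc by simp
  qed
  obtain v where v: "vl \<le> v" "v \<le> v0" "g v = 0" using int_ivt[of g vl v0, OF step \<open>vl \<le> v0\<close> glo] v0
    by (auto simp: g_def)
  have eq: "c1 - int (Nc X1 v) = c2 - int (Nc X2 v)" using v by (simp add: g_def)
  have va2: "a2 \<le> v"
  proof (rule ccontr)
    assume "\<not> a2 \<le> v"
    then have "Nc X2 v = 0" using m2 by (intro Nc_zero) auto
    then show False using eq cc by simp
  qed
  have va1: "a1 \<le> v"
  proof (rule ccontr)
    assume "\<not> a1 \<le> v"
    then have "Nc X1 v = 0" using m1 by (intro Nc_zero) auto
    moreover have "int (Nc X2 v) \<le> max 0 (v - a2)" by (rule Nc_bound_lo[OF s2(1)])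
    ultimately show False using eq cc ha \<open>\<not> a1 \<le> v\<close> by linarith
  qed
  have R1: "int (card X1) - int (Nc X1 v) \<le> max 0 (b1 - v + 1)" by (rule Nc_bound_hi[OF f1 s1(1)])
  have R2: "int (card X2) - int (Nc X2 v) \<le> max 0 (b2 - v + 1)" by (rule Nc_bound_hi[OF f2 s2(1)])
  have R1' : "0 \<le> int (card X1) - int (Nc X1 v)" using Nc_le_card[OF f1] by simp
  have R2' : "0 \<le> int (card X2) - int (Nc X2 v)" using Nc_le_card[OF f2] by simp
  have vb: "v \<le> b1 + 1 \<and> v \<le> b2 + 1"
    using hb eq R1 R2 R1' R2' s1(2) s2(2) by linarith
  show ?thesis using va1 va2 vb eq by blast
qed

context lgv begin

lemma finite_paths: "finite (paths j i)"
  unfolding paths_def by (rule finite_Pset)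

lemma finite_Fam: "finite Fam"
  unfolding Fam_def
  by (intro finite_SigmaI finite_PiE finite_paths) (auto intro: finite_permutations)

lemma det_expand:
  "det (mat n n (\<lambda>(i,j). \<Sum>S\<in>paths j i. Wc \<phi> (ct j) S)) = (\<Sum>F\<in>Fam. wt F)"
proof -
  let ?f = "\<lambda>(i,j). \<Sum>S\<in>paths j i. Wc \<phi> (ct j) S"
  have "det (mat n n ?f) = (\<Sum>p\<in>{p. p permutes {0..<n}}. signof p * (\<Prod>i=0..<n. mat n n ?f $$ (i, p i)))"
    by (rule det_def') simp
  also have "\<dots> = (\<Sum>p\<in>{p. p permutes {0..<n}}. signof p * (\<Prod>i=0..<n. \<Sum>S\<in>paths (p i) i. Wc \<phi> (ct (p i)) S))"
  proof (intro sum.cong refl arg_cong2[where f="(*)"] prod.cong)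
    fix p i assume p: "p \<in> {p. p permutes {0..<n}}" and i: "i \<in> {0..<n}"
    then have "p i < n" by (auto dest: permutes_in_image)
    then show "mat n n ?f $$ (i, p i) = (\<Sum>S\<in>paths (p i) i. Wc \<phi> (ct (p i)) S)" using i by simp
  qed
  also have "\<dots> = (\<Sum>p\<in>{p. p permutes {0..<n}}. \<Sum>g\<in>PiE {0..<n} (\<lambda>i. paths (p i) i). signof p * (\<Prod>i=0..<n. Wc \<phi> (ct (p i)) (g i)))"
    by (intro sum.cong refl) (simp add: prod_sum_PiE finite_paths sum_distrib_left)
  also have "\<dots> = (\<Sum>F\<in>Fam. wt F)"
    unfolding Fam_def wt_def
    by (subst sum.Sigma) (auto intro: finite_permutations finite_PiE finite_paths simp: case_prod_unfold)
  finally show ?thesis .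
qed

end

locale lgv_shape = lgv +
  assumes ct_step: "\<And>t. Suc t < n \<Longrightarrow> ct t < ct (Suc t)"
    and cb_step: "\<And>t. Suc t < n \<Longrightarrow> cb t < cb (Suc t)"
    and flag: "\<And>t. Suc t < n \<Longrightarrow> \<not> (ct t + 2 \<le> cb (Suc t)) \<Longrightarrow>
        a t - a (Suc t) \<le> ct (Suc t) - ct t \<and> b t - b (Suc t) \<le> cb (Suc t) - cb t"
begin

definition Good :: "(nat \<Rightarrow> int set) set" where
  "Good = {S \<in> PiE {0..<n} (\<lambda>i. paths i i). \<forall>i v. Suc i < n \<longrightarrow>
     ct i - int (Nc (S i) v) < ct (Suc i) - int (Nc (S (Suc i)) v)}"

lemma ct_mono: "i < j \<Longrightarrow> j < n \<Longrightarrow> ct i < ct j"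
proof (induction j)
  case 0 then show ?case by simp
next
  case (Suc j)
  then show ?case using ct_step[of j] by (cases "i = j") auto
qed

lemma cb_mono: "i < j \<Longrightarrow> j < n \<Longrightarrow> cb i < cb j"
proof (induction j)
  case 0 then show ?case by simp
next
  case (Suc j)
  then show ?case using cb_step[of j] by (cases "i = j") auto
qed

lemma ct_mono_le: "i \<le> j \<Longrightarrow> j < n \<Longrightarrow> ct i \<le> ct j"
  using ct_mono by (cases "i = j") (auto simp: less_le)

lemma cb_mono_le: "i \<le> j \<Longrightarrow> j < n \<Longrightarrow> cb i \<le> cb j"
  using cb_mono by (cases "i = j") (auto simp: less_le)

lemma path_card_nonneg:
  assumes "(\<sigma>, S) \<in> Fam" "i < n"
  shows "0 \<le> ct (\<sigma> i) - cb i + 1"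
proof -
  have "S i \<in> paths (\<sigma> i) i" using assms by (auto simp: Fam_def)
  then show ?thesis unfolding paths_def Pset_def by auto
qed

lemma block:
  assumes F: "(\<sigma>, S) \<in> Fam" and t: "Suc t < n" and nov: "ct t + 2 \<le> cb (Suc t)" and i: "i < n"
  shows "t < i \<longleftrightarrow> t < \<sigma> i"
proof -
  have perm: "\<sigma> permutes {0..<n}" using F by (simp add: Fam_def)
  define U where "U = {Suc t..<n}"
  have into: "\<sigma> k \<in> U" if "k \<in> U" for k
  proof -
    have k: "k < n" "Suc t \<le> k" using that by (auto simp: U_def)
    have sk: "\<sigma> k < n" using perm k by (auto dest: permutes_in_image)
    have "cb (Suc t) \<le> cb k" using k by (intro cb_mono_le) auto
    moreover have "0 \<le> ct (\<sigma> k) - cb k + 1" using path_card_nonneg[OF F k(1)] .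
    ultimately have "ct t < ct (\<sigma> k)" using nov by linarith
    then have "t < \<sigma> k" using ct_mono_le[of "\<sigma> k" t] t by (metis not_less order.strict_trans1 less_imp_le_nat Suc_lessD)
    then show ?thesis using sk by (simp add: U_def)
  qed
  have inj: "inj_on \<sigma> U" using perm by (meson permutes_inj inj_on_subset subset_UNIV)
  have img: "\<sigma> ` U = U"
    by (rule card_subset_eq) (use into inj in \<open>auto simp: card_image U_def\<close>)
  show ?thesis
  proof
    assume "t < i" then have "i \<in> U" using i by (simp add: U_def)
    then show "t < \<sigma> i" using into[OF \<open>i \<in> U\<close>] by (simp add: U_def)
  next
    assume "t < \<sigma> i"
    moreover have "\<sigma> i < n" using perm i by (auto dest: permutes_in_image)
    ultimately have "\<sigma> i \<in> U" by (simp add: U_def)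
    then obtain k where "k \<in> U" "\<sigma> i = \<sigma> k" using img by (metis imageE)
    then have "i = k" using perm by (metis permutes_inj injD)
    then show "t < i" using \<open>k \<in> U\<close> by (simp add: U_def)
  qed
qed

lemma telescope:
  assumes "j \<le> j'" "j' < n" "\<And>t. j \<le> t \<Longrightarrow> t < j' \<Longrightarrow> \<not> (ct t + 2 \<le> cb (Suc t))"
  shows "a j - a j' \<le> ct j' - ct j"
  using assms
proof (induction j')
  case 0 then show ?case by simp
next
  case (Suc k)
  show ?case
  proof (cases "j = Suc k")
    case True then show ?thesis by simp
  next
    case False
    then have jk: "j \<le> k" using Suc.prems by simp
    have "a j - a k \<le> ct k - ct j" using Suc.IH[OF jk] Suc.prems by auto
    moreover have "a k - a (Suc k) \<le> ct (Suc k) - ct k" using flag[of k] Suc.prems jk by auto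
    ultimately show ?thesis by simp
  qed
qed

lemma descent:
  assumes perm: "\<sigma> permutes {0..<n}" and ne: "\<sigma> \<noteq> id"
  shows "\<exists>p. Suc p < n \<and> \<sigma> (Suc p) < \<sigma> p"
proof (rule ccontr)
  assume "\<not> ?thesis"
  then have le: "\<sigma> p \<le> \<sigma> (Suc p)" if "Suc p < n" for p using that by (meson not_less)
  have inj: "inj \<sigma>" using perm by (rule permutes_inj)
  have lt: "\<sigma> p < \<sigma> (Suc p)" if "Suc p < n" for p using le[OF that] inj by (metis injD le_neq_implies_less n_not_Suc_n)
  have up: "\<sigma> i + k \<le> \<sigma> (i + k)" if "i + k < n" for i k
    using that proof (induction k)
    case 0 then show ?case by simp
  next
    case (Suc k) then show ?case using lt[of "i + k"] by simp
  qed
  have ge: "i \<le> \<sigma> i" if "i < n" for i using up[of 0 i] that by simp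
  have le2: "\<sigma> i \<le> i" if "i < n" for i
  proof -
    have "\<sigma> i + (n - 1 - i) \<le> \<sigma> (i + (n - 1 - i))" using up[of i "n - 1 - i"] that by simp
    moreover have "\<sigma> (n - 1) < n" using perm that by (auto dest: permutes_in_image)
    ultimately show ?thesis using that by simp
  qed
  have "\<sigma> x = x" for x
  proof (cases "x < n")
    case True then show ?thesis using ge le2 by (simp add: le_antisym)
  next
    case False then show ?thesis using perm by (auto intro: permutes_not_in)
  qed
  then show False using ne by (auto simp: fun_eq_iff)
qed

end

context lgv_shape begin

lemma Fam_paths:
  assumes "(\<sigma>, S) \<in> Fam" "i < n"
  shows "S i \<in> Pset (a (\<sigma> i)) (b i) (ct (\<sigma> i) - cb i + 1)"
  using assms by (auto simp: Fam_def paths_def)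

lemma nonid_bad:
  assumes F: "(\<sigma>, S) \<in> Fam" and ne: "\<sigma> \<noteq> id"
  shows "Vs \<sigma> S \<noteq> {}"
proof -
  have perm: "\<sigma> permutes {0..<n}" using F by (simp add: Fam_def)
  obtain p where p: "Suc p < n" "\<sigma> (Suc p) < \<sigma> p" using descent[OF perm ne] by blast
  define j1 j2 where "j1 = \<sigma> (Suc p)" and "j2 = \<sigma> p"
  have j2n: "j2 < n" using perm p by (auto simp: j2_def dest: permutes_in_image)
  have j12: "j1 < j2" using p by (simp add: j1_def j2_def)
  have ovp: "\<not> (ct p + 2 \<le> cb (Suc p))"
  proof
    assume nov: "ct p + 2 \<le> cb (Suc p)"
    have "p < \<sigma> (Suc p)" using block[OF F p(1) nov, of "Suc p"] p by simp
    moreover have "\<not> p < \<sigma> p" using block[OF F p(1) nov, of p] p by simp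
    ultimately show False using p by simp
  qed
  have ovt: "\<not> (ct t + 2 \<le> cb (Suc t))" if "j1 \<le> t" "t < j2" for t
  proof
    assume nov: "ct t + 2 \<le> cb (Suc t)"
    have tn: "Suc t < n" using that j2n by simp
    have "t < p" using block[OF F tn nov, of p] that p by (simp add: j2_def)
    then have "t < \<sigma> (Suc p)" using block[OF F tn nov, of "Suc p"] p by simp
    then show False using that by (simp add: j1_def)
  qed
  have ha: "a j1 - a j2 \<le> ct j2 - ct j1" using telescope[of j1 j2] j12 j2n ovt by simp
  have hb: "b p - b (Suc p) \<le> cb (Suc p) - cb p" using flag[OF p(1) ovp] by simp
  have cc: "ct j1 < ct j2" using ct_mono j12 j2n by simp
  have cbp: "cb p < cb (Suc p)" using cb_step p by simp
  have X1: "S (Suc p) \<in> Pset (a j1) (b (Suc p)) (ct j1 - cb (Suc p) + 1)" using Fam_paths[OF F p(1)] by (simp add: j1_def)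
  have X2: "S p \<in> Pset (a j2) (b p) (ct j2 - cb p + 1)" using Fam_paths[OF F] p by (simp add: j2_def)
  define v0 where "v0 = max (b p) (b (Suc p)) + 1"
  have c1: "int (Nc (S (Suc p)) v0) = ct j1 - cb (Suc p) + 1"
  proof -
    have "\<forall>t\<in>S (Suc p). t < v0" using X1 by (force simp: Pset_def v0_def)
    then show ?thesis using X1 by (simp add: Nc_full Pset_def)
  qed
  have c2: "int (Nc (S p) v0) = ct j2 - cb p + 1"
  proof -
    have "\<forall>t\<in>S p. t < v0" using X2 by (force simp: Pset_def v0_def)
    then show ?thesis using X2 by (simp add: Nc_full Pset_def)
  qed
  have "ct j1 - int (Nc (S (Suc p)) v0) \<ge> ct j2 - int (Nc (S p) v0)" using c1 c2 cbp by simp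
  then obtain v where v: "a j1 \<le> v" "v \<le> b (Suc p) + 1" "a j2 \<le> v" "v \<le> b p + 1"
      "ct j1 - int (Nc (S (Suc p)) v) = ct j2 - int (Nc (S p) v)"
    using crossing[OF X1 X2 cc ha] hb cbp by blast
  have "sh \<sigma> S v (Suc p) p" using v p unfolding sh_def rv_def pos_def j1_def j2_def by auto
  then show ?thesis by (auto simp: Vs_def)
qed

lemma id_notgood_bad:
  assumes F: "(id, S) \<in> Fam" and ng: "S \<notin> Good"
  shows "Vs id S \<noteq> {}"
proof -
  have SP: "S \<in> PiE {0..<n} (\<lambda>i. paths i i)" using F by (simp add: Fam_def)
  obtain i v0 where i: "Suc i < n" and v0: "ct i - int (Nc (S i) v0) \<ge> ct (Suc i) - int (Nc (S (Suc i)) v0)"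
    using ng SP unfolding Good_def by (auto simp: not_less)
  have X1: "S i \<in> Pset (a i) (b i) (ct i - cb i + 1)" using Fam_paths[OF F] i by simp
  have X2: "S (Suc i) \<in> Pset (a (Suc i)) (b (Suc i)) (ct (Suc i) - cb (Suc i) + 1)" using Fam_paths[OF F i] by simp
  have ov: "\<not> (ct i + 2 \<le> cb (Suc i))"
  proof
    assume nov: "ct i + 2 \<le> cb (Suc i)"
    have f: "finite (S (Suc i))" using X2 by (auto simp: Pset_def dest: finite_subset)
    have "int (Nc (S (Suc i)) v0) \<le> int (card (S (Suc i)))" using Nc_le_card[OF f] by simp
    also have "\<dots> = ct (Suc i) - cb (Suc i) + 1" using X2 by (simp add: Pset_def)
    finally show False using v0 nov by simp
  qed
  have fl: "a i - a (Suc i) \<le> ct (Suc i) - ct i" "b i - b (Suc i) \<le> cb (Suc i) - cb i" using flag[OF i ov] by auto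
  have cc: "ct i < ct (Suc i)" using ct_step i by simp
  have cbp: "cb i < cb (Suc i)" using cb_step i by simp
  obtain v where v: "a i \<le> v" "v \<le> b i + 1" "a (Suc i) \<le> v" "v \<le> b (Suc i) + 1"
      "ct i - int (Nc (S i) v) = ct (Suc i) - int (Nc (S (Suc i)) v)"
    using crossing[OF X1 X2 cc fl(1) _ v0] fl(2) cbp by blast
  have "sh id S v i (Suc i)" using v i unfolding sh_def rv_def pos_def by auto
  then show ?thesis by (auto simp: Vs_def)
qed

lemma good_chain:
  assumes G: "S \<in> Good" and "i < i'" "i' < n"
  shows "ct i - int (Nc (S i) v) < ct i' - int (Nc (S i') v)"
  using assms(2,3)
proof (induction i')
  case 0 then show ?case by simp
next
  case (Suc k)
  have step: "ct k - int (Nc (S k) v) < ct (Suc k) - int (Nc (S (Suc k)) v)"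
    using G Suc.prems unfolding Good_def by auto
  show ?case
  proof (cases "i = k")
    case True then show ?thesis using step by simp
  next
    case False
    then have "ct i - int (Nc (S i) v) < ct k - int (Nc (S k) v)" using Suc by simp
    then show ?thesis using step by simp
  qed
qed

lemma good_ok:
  assumes G: "S \<in> Good"
  shows "(id, S) \<in> Fam" "Vs id S = {}"
proof -
  show "(id, S) \<in> Fam" using G by (simp add: Good_def Fam_def permutes_id)
  show "Vs id S = {}"
  proof (rule ccontr)
    assume "Vs id S \<noteq> {}"
    then obtain v p q where sh: "sh id S v p q" by (auto simp: Vs_def)
    then have pq: "p \<noteq> q" "p < n" "q < n" "pos id S p v = pos id S q v" by (auto simp: sh_def)
    show False
    proof (cases "p < q")
      case True then show False using good_chain[OF G True pq(3), of v] pq by (simp add: pos_def)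
    next
      case False then have qp: "q < p" using pq by simp
      show False using good_chain[OF G qp pq(2), of v] pq by (simp add: pos_def)
    qed
  qed
qed

lemma nobad_eq: "{F\<in>Fam. Vs (fst F) (snd F) = {}} = (\<lambda>S. (id::nat\<Rightarrow>nat, S)) ` Good"
proof (intro equalityI subsetI)
  fix F assume "F \<in> {F\<in>Fam. Vs (fst F) (snd F) = {}}"
  moreover obtain \<sigma> S where FS: "F = (\<sigma>, S)" by (cases F)
  ultimately have F: "(\<sigma>, S) \<in> Fam" "Vs \<sigma> S = {}" by auto
  have "\<sigma> = id" using nonid_bad[OF F(1)] F(2) by blast
  moreover have "S \<in> Good" using id_notgood_bad F \<open>\<sigma> = id\<close> by blast
  ultimately show "F \<in> (\<lambda>S. (id::nat\<Rightarrow>nat, S)) ` Good" using FS by blast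
next
  fix F assume "F \<in> (\<lambda>S. (id::nat\<Rightarrow>nat, S)) ` Good"
  then obtain S where "S \<in> Good" "F = (id, S)" by auto
  then show "F \<in> {F\<in>Fam. Vs (fst F) (snd F) = {}}" using good_ok by auto
qed

lemma lgv_main:
  "det (mat n n (\<lambda>(i,j). \<Sum>S\<in>paths j i. Wc \<phi> (ct j) S)) = (\<Sum>S\<in>Good. \<Prod>i=0..<n. Wc \<phi> (ct i) (S i))"
proof -
  have split: "Fam = {F\<in>Fam. Vs (fst F) (snd F) \<noteq> {}} \<union> {F\<in>Fam. Vs (fst F) (snd F) = {}}" by auto
  have "(\<Sum>F\<in>Fam. wt F) = (\<Sum>F\<in>{F\<in>Fam. Vs (fst F) (snd F) \<noteq> {}}. wt F) + (\<Sum>F\<in>{F\<in>Fam. Vs (fst F) (snd F) = {}}. wt F)"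
    by (subst split, rule sum.union_disjoint) (use finite_Fam in auto)
  also have "\<dots> = (\<Sum>F\<in>(\<lambda>S. (id::nat\<Rightarrow>nat, S)) ` Good. wt F)" using Bad_sum_zero nobad_eq by simp
  also have "\<dots> = (\<Sum>S\<in>Good. wt (id, S))" by (rule sum.reindex_cong[where l = "\<lambda>S. (id, S)"]) (auto simp: inj_on_def)
  also have "\<dots> = (\<Sum>S\<in>Good. \<Prod>i=0..<n. Wc \<phi> (ct i) (S i))" by (simp add: wt_def)
  finally show ?thesis using det_expand by simp
qed

end

definition SSYT0 :: "(nat \<times> nat) set \<Rightarrow> (nat \<Rightarrow> int) \<Rightarrow> (nat \<Rightarrow> int) \<Rightarrow> (nat \<times> nat \<Rightarrow> int) set" where
  "SSYT0 C a b = {T. flagged_ssyt C a b T \<and> (\<forall>c. c \<notin> C \<longrightarrow> T c = 0)}"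

definition mkS :: "(nat \<times> nat) set \<Rightarrow> (nat \<Rightarrow> nat \<Rightarrow> int) \<Rightarrow> (nat \<times> nat \<Rightarrow> int) \<Rightarrow> (nat \<times> nat) set \<Rightarrow> (nat \<times> nat \<Rightarrow> sentry)" where
  "mkS C cf T P = (\<lambda>(i, j). if (i, j) \<in> C then
                       (if (i, j) \<in> P then Pr (T (i, j) + cf i j) else Unp (T (i, j)))
                     else Unp 0)"

lemma finite_SSYT0:
  assumes "finite C"
  shows "finite (SSYT0 C a b)"
proof -
  define R where "R = (\<Union>c\<in>C. {a (snd c)..b (snd c)})"
  have fR: "finite R" using assms by (simp add: R_def)
  have "SSYT0 C a b \<subseteq> (\<lambda>g c. if c \<in> C then g c else 0) ` PiE C (\<lambda>_. R)"
  proof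
    fix T assume T: "T \<in> SSYT0 C a b"
    have "T = (\<lambda>c. if c \<in> C then restrict T C c else 0)" using T by (auto simp: SSYT0_def fun_eq_iff)
    moreover have "restrict T C \<in> PiE C (\<lambda>_. R)" using T
      by (auto simp: SSYT0_def flagged_ssyt_def R_def)
    ultimately show "T \<in> (\<lambda>g c. if c \<in> C then g c else 0) ` PiE C (\<lambda>_. R)" by blast
  qed
  moreover have "finite (PiE C (\<lambda>_. R))" using assms fR by (intro finite_PiE) auto
  ultimately show ?thesis by (meson finite_imageI finite_subset)
qed

lemma super_tabs_image:
  "super_tabs C cf a b = (\<lambda>(T, P). mkS C cf T P) ` (SSYT0 C a b \<times> Pow C)"
proof (intro equalityI subsetI)
  fix S assume "S \<in> super_tabs C cf a b"
  then obtain T P where TP: "flagged_ssyt C a b T" "P \<subseteq> C" "S = mkS C cf T P"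
    unfolding super_tabs_def mkS_def by blast
  define T0 where "T0 c = (if c \<in> C then T c else 0)" for c
  have "T0 \<in> SSYT0 C a b" using TP(1) unfolding SSYT0_def flagged_ssyt_def T0_def by auto
  moreover have "S = mkS C cf T0 P" using TP(3) by (auto simp: mkS_def T0_def fun_eq_iff)
  ultimately show "S \<in> (\<lambda>(T, P). mkS C cf T P) ` (SSYT0 C a b \<times> Pow C)" using TP(2) by blast
next
  fix S assume "S \<in> (\<lambda>(T, P). mkS C cf T P) ` (SSYT0 C a b \<times> Pow C)"
  then obtain T P where "T \<in> SSYT0 C a b" "P \<subseteq> C" "S = mkS C cf T P" by auto
  then show "S \<in> super_tabs C cf a b" unfolding super_tabs_def mkS_def SSYT0_def by blast
qed

lemma mkS_inj: "inj_on (\<lambda>(T, P). mkS C cf T P) (SSYT0 C a b \<times> Pow C)"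
proof (rule inj_onI, clarify)
  fix T1 P1 T2 P2 assume 1: "T1 \<in> SSYT0 C a b" "P1 \<subseteq> C" and 2: "T2 \<in> SSYT0 C a b" "P2 \<subseteq> C"
    and eq: "mkS C cf T1 P1 = mkS C cf T2 P2"
  have c: "mkS C cf T1 P1 (i, j) = mkS C cf T2 P2 (i, j)" for i j using eq by simp
  have "P1 = P2"
  proof (intro equalityI subsetI)
    fix c assume "c \<in> P1" then show "c \<in> P2" using c[of "fst c" "snd c"] 1 2
      by (cases c) (auto simp: mkS_def split: if_splits)
  next
    fix c assume "c \<in> P2" then show "c \<in> P1" using c[of "fst c" "snd c"] 1 2
      by (cases c) (auto simp: mkS_def split: if_splits)
  qed
  moreover have "T1 = T2"
  proof
    fix c show "T1 c = T2 c"
    proof (cases "c \<in> C")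
      case False
      have "T1 c = 0" "T2 c = 0" using 1(1) 2(1) False unfolding SSYT0_def by blast+
      then show ?thesis by simp
    next
      case True then show ?thesis using c[of "fst c" "snd c"] \<open>P1 = P2\<close>
        by (cases c) (auto simp: mkS_def split: if_splits)
    qed
  qed
  ultimately show "T1 = T2 \<and> P1 = P2" by simp
qed

definition ge :: "nat \<Rightarrow> sentry \<Rightarrow> gentry" where
  "ge m e = (case e of
         Unp t \<Rightarrow> (if 1 \<le> t \<and> t \<le> int m then Plain t
                   else if t > int m then Circ (t - int m) else Bul (t - 1))
       | Pr t \<Rightarrow> (if t > int m then Bul (t - int m) else Circ (t - 1)))"

lemma to_g_ge: "to_g m C S = (\<lambda>c. if c \<in> C then ge m (S c) else Plain 0)"
  unfolding to_g_def ge_def by simp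

definition okE :: "nat \<Rightarrow> sentry \<Rightarrow> bool" where
  "okE m e = (\<forall>t. e = Pr t \<longrightarrow> \<not> (1 \<le> t \<and> t \<le> int m))"

lemma ge_inj: "okE m e1 \<Longrightarrow> okE m e2 \<Longrightarrow> ge m e1 = ge m e2 \<Longrightarrow> e1 = e2"
  unfolding okE_def ge_def
  by (cases e1; cases e2) (auto split: if_splits)

definition wE :: "nat \<Rightarrow> (nat \<Rightarrow> 'a::comm_ring_1) \<Rightarrow> (nat \<Rightarrow> 'a) \<Rightarrow> (nat \<Rightarrow> 'a) \<Rightarrow> sentry \<Rightarrow> 'a" where
  "wE m x \<alpha> \<beta> e = (case e of Unp t \<Rightarrow> gy m x \<alpha> \<beta> t | Pr t \<Rightarrow> - gz m \<alpha> \<beta> t)"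

lemma gwt_ge: "okE m e \<Longrightarrow> gwt x \<alpha> \<beta> (ge m e) = wE m x \<alpha> \<beta> e"
  unfolding okE_def ge_def gwt_def wE_def gy_def gz_def
  by (cases e) (auto simp: nat_diff_distrib)

lemma wE_bad: "\<not> okE m e \<Longrightarrow> wE m x \<alpha> \<beta> e = 0"
  unfolding okE_def wE_def gz_def by auto

lemma super_tabs_out: "S \<in> super_tabs C cf a b \<Longrightarrow> c \<notin> C \<Longrightarrow> S c = Unp 0"
  unfolding super_tabs_def by (cases c) auto

lemma gtabs_sum:
  fixes x \<alpha> \<beta> :: "nat \<Rightarrow> 'a::comm_ring_1"
  assumes finC: "finite C"
  shows "(\<Sum>T\<in>g_tabs m C cf a b. tab_wt C x \<alpha> \<beta> T)
       = (\<Sum>T\<in>SSYT0 C a b. \<Prod>c\<in>C. gy m x \<alpha> \<beta> (T c) - gz m \<alpha> \<beta> (T c + cf (fst c) (snd c)))"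
proof -
  define SP where "SP = {S\<in>super_tabs C cf a b. \<forall>c t. S c = Pr t \<longrightarrow> \<not> (1 \<le> t \<and> t \<le> int m)}"
  have gt: "g_tabs m C cf a b = to_g m C ` SP" unfolding g_tabs_def SP_def ..
  have ok: "okE m (S c)" if "S \<in> SP" for S c using that unfolding SP_def okE_def by blast
  have inj: "inj_on (to_g m C) SP"
  proof (rule inj_onI)
    fix S1 S2 assume S: "S1 \<in> SP" "S2 \<in> SP" and eq: "to_g m C S1 = to_g m C S2"
    show "S1 = S2"
    proof
      fix c show "S1 c = S2 c"
      proof (cases "c \<in> C")
        case True
        then have "ge m (S1 c) = ge m (S2 c)" using fun_cong[OF eq, of c] by (simp add: to_g_ge)
        then show ?thesis using ge_inj ok S by blast
      next
        case False
        have "S1 \<in> super_tabs C cf a b" "S2 \<in> super_tabs C cf a b" using S unfolding SP_def by blast+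
        then show ?thesis using super_tabs_out False by metis
      qed
    qed
  qed
  have fin_st: "finite (super_tabs C cf a b)"
    unfolding super_tabs_image using finC by (intro finite_imageI finite_cartesian_product finite_SSYT0) auto
  have "(\<Sum>T\<in>g_tabs m C cf a b. tab_wt C x \<alpha> \<beta> T) = (\<Sum>S\<in>SP. tab_wt C x \<alpha> \<beta> (to_g m C S))"
    unfolding gt by (rule sum.reindex[OF inj, unfolded comp_def])
  also have "\<dots> = (\<Sum>S\<in>SP. \<Prod>c\<in>C. wE m x \<alpha> \<beta> (S c))"
    unfolding tab_wt_def by (intro sum.cong refl prod.cong) (auto simp: to_g_ge gwt_ge ok)
  also have "\<dots> = (\<Sum>S\<in>super_tabs C cf a b. \<Prod>c\<in>C. wE m x \<alpha> \<beta> (S c))"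
  proof (rule sum.mono_neutral_left[OF fin_st])
    show "SP \<subseteq> super_tabs C cf a b" by (auto simp: SP_def)
    show "\<forall>S\<in>super_tabs C cf a b - SP. (\<Prod>c\<in>C. wE m x \<alpha> \<beta> (S c)) = 0"
    proof
      fix S assume S: "S \<in> super_tabs C cf a b - SP"
      then have "\<not> (\<forall>c t. S c = Pr t \<longrightarrow> \<not> (1 \<le> t \<and> t \<le> int m))" unfolding SP_def by blast
      then obtain c t where ct: "S c = Pr t" "1 \<le> t" "t \<le> int m" by blast
      have "c \<in> C"
      proof (rule ccontr)
        assume "c \<notin> C"
        then have "S c = Unp 0" using S super_tabs_out by blast
        then show False using ct by simp
      qed
      moreover have "wE m x \<alpha> \<beta> (S c) = 0" using ct by (intro wE_bad) (auto simp: okE_def)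
      ultimately show "(\<Prod>c\<in>C. wE m x \<alpha> \<beta> (S c)) = 0" by (intro prod_zero[OF finC]) blast
    qed
  qed
  also have "\<dots> = (\<Sum>TP\<in>SSYT0 C a b \<times> Pow C. \<Prod>c\<in>C. wE m x \<alpha> \<beta> ((\<lambda>(T, P). mkS C cf T P) TP c))"
    unfolding super_tabs_image by (rule sum.reindex[OF mkS_inj, unfolded comp_def])
  also have "\<dots> = (\<Sum>T\<in>SSYT0 C a b. \<Sum>P\<in>Pow C. \<Prod>c\<in>C. wE m x \<alpha> \<beta> (mkS C cf T P c))"
    by (subst sum.cartesian_product) (simp add: case_prod_unfold)
  also have "\<dots> = (\<Sum>T\<in>SSYT0 C a b. \<Prod>c\<in>C. gy m x \<alpha> \<beta> (T c) - gz m \<alpha> \<beta> (T c + cf (fst c) (snd c)))"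
  proof (intro sum.cong refl)
    fix T
    define f1 where "f1 c = - gz m \<alpha> \<beta> (T c + cf (fst c) (snd c))" for c
    define f2 where "f2 c = gy m x \<alpha> \<beta> (T c)" for c
    have "(\<Sum>P\<in>Pow C. \<Prod>c\<in>C. wE m x \<alpha> \<beta> (mkS C cf T P c)) = (\<Sum>P\<in>Pow C. (\<Prod>c\<in>P. f1 c) * (\<Prod>c\<in>C - P. f2 c))"
    proof (intro sum.cong refl)
      fix P assume P: "P \<in> Pow C"
      have C: "C = P \<union> (C - P)" "P \<inter> (C - P) = {}" "finite P" "finite (C - P)" using P finC
        by (auto dest: finite_subset)
      have "(\<Prod>c\<in>C. wE m x \<alpha> \<beta> (mkS C cf T P c)) = (\<Prod>c\<in>P. wE m x \<alpha> \<beta> (mkS C cf T P c)) * (\<Prod>c\<in>C - P. wE m x \<alpha> \<beta> (mkS C cf T P c))"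
        using C by (metis prod.union_disjoint)
      also have "\<dots> = (\<Prod>c\<in>P. f1 c) * (\<Prod>c\<in>C - P. f2 c)"
        using P by (intro arg_cong2[where f="(*)"] prod.cong refl)
          (auto simp: mkS_def wE_def f1_def f2_def case_prod_unfold)
      finally show "(\<Prod>c\<in>C. wE m x \<alpha> \<beta> (mkS C cf T P c)) = (\<Prod>c\<in>P. f1 c) * (\<Prod>c\<in>C - P. f2 c)" .
    qed
    also have "\<dots> = (\<Prod>c\<in>C. f1 c + f2 c)" by (rule prod_add[OF finC, symmetric])
    also have "\<dots> = (\<Prod>c\<in>C. gy m x \<alpha> \<beta> (T c) - gz m \<alpha> \<beta> (T c + cf (fst c) (snd c)))"
      by (simp add: f1_def f2_def)
    finally show "(\<Sum>P\<in>Pow C. \<Prod>c\<in>C. wE m x \<alpha> \<beta> (mkS C cf T P c)) = (\<Prod>c\<in>C. gy m x \<alpha> \<beta> (T c) - gz m \<alpha> \<beta> (T c + cf (fst c) (snd c)))" .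
  qed
  finally show ?thesis .
qed

definition sinc :: "(nat \<Rightarrow> int) \<Rightarrow> nat \<Rightarrow> nat \<Rightarrow> bool" where
  "sinc f M L \<longleftrightarrow> (\<forall>p q. M < p \<longrightarrow> p < q \<longrightarrow> q \<le> L \<longrightarrow> f p < f q)"

lemma sinc_lt_iff:
  assumes "sinc f M L" "M < p" "p \<le> L" "M < q" "q \<le> L"
  shows "f p < f q \<longleftrightarrow> p < q"
  using assms unfolding sinc_def by (metis linorder_neqE_nat order_less_asym)

lemma card_init:
  assumes s: "sinc f M L" and p: "M < p" "p \<le> L" and fp: "f p < v"
  shows "p - M \<le> card {r\<in>{M<..L}. f r < v}"
proof -
  have "{M<..p} \<subseteq> {r\<in>{M<..L}. f r < v}"
  proof
    fix r assume r: "r \<in> {M<..p}"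
    then have "f r \<le> f p" using s p unfolding sinc_def by (cases "r = p") (auto intro: less_imp_le)
    then show "r \<in> {r\<in>{M<..L}. f r < v}" using r p fp by auto
  qed
  then have "card {M<..p} \<le> card {r\<in>{M<..L}. f r < v}" by (intro card_mono) auto
  then show ?thesis by simp
qed

lemma row_count:
  assumes sf: "sinc f M1 L1" and sg: "sinc g M2 L2"
    and M: "M2 \<le> M1" and L: "L2 \<le> L1"
  shows "(\<forall>r. M1 < r \<and> r \<le> L2 \<longrightarrow> f r \<le> g r) \<longleftrightarrow>
         (\<forall>v. card {r\<in>{M2<..L2}. g r < v} \<le> card {r\<in>{M1<..L1}. f r < v} + (M1 - M2))"
proof
  assume R: "\<forall>r. M1 < r \<and> r \<le> L2 \<longrightarrow> f r \<le> g r"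
  show "\<forall>v. card {r\<in>{M2<..L2}. g r < v} \<le> card {r\<in>{M1<..L1}. f r < v} + (M1 - M2)"
  proof
    fix v
    define q where "q = card {r\<in>{M1<..L1}. f r < v}"
    have "{r\<in>{M2<..L2}. g r < v} \<subseteq> {M2<..M1 + q}"
    proof
      fix r assume r: "r \<in> {r\<in>{M2<..L2}. g r < v}"
      show "r \<in> {M2<..M1 + q}"
      proof (rule ccontr)
        assume "r \<notin> {M2<..M1 + q}"
        then have r1: "M1 + q < r" using r by auto
        then have "f r \<le> g r" using R r by auto
        then have "f r < v" using r by auto
        then have "r - M1 \<le> q" unfolding q_def using card_init[OF sf, of r v] r r1 L by auto
        then show False using r1 by simp
      qed
    qed
    then have "card {r\<in>{M2<..L2}. g r < v} \<le> card {M2<..M1 + q}" by (intro card_mono) auto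
    then show "card {r\<in>{M2<..L2}. g r < v} \<le> q + (M1 - M2)" using M by simp
  qed
next
  assume C: "\<forall>v. card {r\<in>{M2<..L2}. g r < v} \<le> card {r\<in>{M1<..L1}. f r < v} + (M1 - M2)"
  show "\<forall>r. M1 < r \<and> r \<le> L2 \<longrightarrow> f r \<le> g r"
  proof (intro allI impI, rule ccontr)
    fix r assume r: "M1 < r \<and> r \<le> L2" and nle: "\<not> f r \<le> g r"
    have "{r'\<in>{M1<..L1}. f r' < f r} = {M1<..<r}"
    proof (intro equalityI subsetI)
      fix r' assume "r' \<in> {r'\<in>{M1<..L1}. f r' < f r}"
      then show "r' \<in> {M1<..<r}" using sinc_lt_iff[OF sf, of r' r] r L by auto
    next
      fix r' assume "r' \<in> {M1<..<r}"
      then show "r' \<in> {r'\<in>{M1<..L1}. f r' < f r}" using sinc_lt_iff[OF sf, of r' r] r L by auto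
    qed
    then have c1: "card {r'\<in>{M1<..L1}. f r' < f r} = r - M1 - 1" by simp
    have c2: "r - M2 \<le> card {r'\<in>{M2<..L2}. g r' < f r}"
      using card_init[OF sg, of r "f r"] r M nle by auto
    show False using C[rule_format, of "f r"] c1 c2 r M by linarith
  qed
qed

definition enum :: "int set \<Rightarrow> nat \<Rightarrow> int" where
  "enum X p = sorted_list_of_set X ! p"

lemma enum_mono:
  assumes "finite X" "p < q" "q < card X"
  shows "enum X p < enum X q"
  unfolding enum_def using assms
  by (intro sorted_wrt_nth_less[where P="(<)"]) (auto simp: strict_sorted_list_of_set)

lemma enum_in:
  assumes "finite X" "p < card X"
  shows "enum X p \<in> X"
  unfolding enum_def using assms by (metis length_sorted_list_of_set nth_mem set_sorted_list_of_set)

lemma enum_image: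
  assumes "finite X"
  shows "enum X ` {..<card X} = X"
proof (intro equalityI subsetI)
  fix s assume "s \<in> enum X ` {..<card X}" then show "s \<in> X" using enum_in assms by auto
next
  fix s assume "s \<in> X" then have "s \<in> set (sorted_list_of_set X)" using assms by simp
  then obtain p where "p < length (sorted_list_of_set X)" "sorted_list_of_set X ! p = s" by (metis in_set_conv_nth)
  then show "s \<in> enum X ` {..<card X}" by (auto simp: enum_def)
qed

lemma enum_of_image:
  assumes s: "\<And>p q. p < q \<Longrightarrow> q < k \<Longrightarrow> f p < (f q :: int)" and p: "p < k"
  shows "enum (f ` {..<k}) p = f p"
proof -
  have inj: "inj_on f {..<k}"
    by (rule inj_onI) (metis lessThan_iff linorder_neqE_nat s order_less_irrefl)
  have sw: "sorted_wrt (<) (map f [0..<k])"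
    unfolding sorted_wrt_iff_nth_less by (auto intro: s)
  have "sorted_list_of_set (f ` {..<k}) = map f [0..<k]"
    using sw inj by (subst sorted_list_of_set_unique[symmetric]) (auto simp: card_image)
  then show ?thesis using p unfolding enum_def by simp
qed

locale tabl =
  fixes n :: nat and M L :: "nat \<Rightarrow> nat" and K :: int and a b :: "nat \<Rightarrow> int"
    and \<phi> :: "int \<Rightarrow> int \<Rightarrow> 'a::comm_ring_1"
  assumes hML: "\<And>i. M i \<le> L i" and Mmono: "\<And>i. M (Suc i) \<le> M i" and Lmono: "\<And>i. L (Suc i) \<le> L i"
begin

definition Cs :: "(nat \<times> nat) set" where
  "Cs = {(r, Suc i) | r i. i < n \<and> M i < r \<and> r \<le> L i}"
definition ct :: "nat \<Rightarrow> int" where "ct i = int (Suc i) - int (M i) - 1 + K"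
definition cb :: "nat \<Rightarrow> int" where "cb i = int (Suc i) - int (L i) + K"
definition a0 :: "nat \<Rightarrow> int" where "a0 i = a (Suc i)"
definition b0 :: "nat \<Rightarrow> int" where "b0 i = b (Suc i)"
definition colset :: "(nat \<times> nat \<Rightarrow> int) \<Rightarrow> nat \<Rightarrow> int set" where
  "colset T i = (\<lambda>r. T (r, Suc i)) ` {M i<..L i}"
definition Goodt :: "(nat \<Rightarrow> int set) set" where
  "Goodt = {S \<in> PiE {0..<n} (\<lambda>i. Pset (a0 i) (b0 i) (ct i - cb i + 1)). \<forall>i v. Suc i < n \<longrightarrow>
     ct i - int (Nc (S i) v) < ct (Suc i) - int (Nc (S (Suc i)) v)}"
definition fwd :: "(nat \<times> nat \<Rightarrow> int) \<Rightarrow> nat \<Rightarrow> int set" where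
  "fwd T = restrict (colset T) {0..<n}"
definition bwd :: "(nat \<Rightarrow> int set) \<Rightarrow> nat \<times> nat \<Rightarrow> int" where
  "bwd S = (\<lambda>(r, col). if (r, col) \<in> Cs then enum (S (col - 1)) (r - M (col - 1) - 1) else 0)"

lemma Cs_iff: "(r, Suc i) \<in> Cs \<longleftrightarrow> i < n \<and> M i < r \<and> r \<le> L i"
  unfolding Cs_def by auto

lemma Cs_0: "(r, 0) \<notin> Cs"
  unfolding Cs_def by auto

lemma Cs_cases: "c \<in> Cs \<Longrightarrow> (\<And>r i. c = (r, Suc i) \<Longrightarrow> i < n \<Longrightarrow> M i < r \<Longrightarrow> r \<le> L i \<Longrightarrow> P) \<Longrightarrow> P"
  unfolding Cs_def by auto

lemma col_sinc:
  assumes T: "flagged_ssyt Cs a b T" and i: "i < n"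
  shows "sinc (\<lambda>r. T (r, Suc i)) (M i) (L i)"
  unfolding sinc_def
proof (intro allI impI)
  fix p q assume pq: "M i < p" "p < q" "q \<le> L i"
  then show "T (p, Suc i) < T (q, Suc i)"
  proof (induction q)
    case 0 then show ?case by simp
  next
    case (Suc q)
    have step: "T (q, Suc i) < T (Suc q, Suc i)"
      using T Suc.prems i unfolding flagged_ssyt_def by (auto simp: Cs_iff)
    show ?case
    proof (cases "p = q")
      case True then show ?thesis using step by simp
    next
      case False then show ?thesis using Suc step by simp
    qed
  qed
qed

lemma Nc_colset:
  assumes s: "sinc (\<lambda>r. T (r, Suc i)) (M i) (L i)"
  shows "Nc (colset T i) v = card {r\<in>{M i<..L i}. T (r, Suc i) < v}"
proof -
  have inj: "inj_on (\<lambda>r. T (r, Suc i)) {M i<..L i}"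
    by (rule inj_onI) (metis greaterThanAtMost_iff less_irrefl linorder_neqE_nat sinc_lt_iff[OF s])
  have "{t \<in> colset T i. t < v} = (\<lambda>r. T (r, Suc i)) ` {r\<in>{M i<..L i}. T (r, Suc i) < v}"
    unfolding colset_def by auto
  moreover have "inj_on (\<lambda>r. T (r, Suc i)) {r\<in>{M i<..L i}. T (r, Suc i) < v}"
    using inj by (rule inj_on_subset) auto
  ultimately show ?thesis unfolding Nc_def by (simp add: card_image)
qed

lemma card_colset:
  assumes s: "sinc (\<lambda>r. T (r, Suc i)) (M i) (L i)"
  shows "card (colset T i) = L i - M i"
proof -
  have inj: "inj_on (\<lambda>r. T (r, Suc i)) {M i<..L i}"
    by (rule inj_onI) (metis greaterThanAtMost_iff less_irrefl linorder_neqE_nat sinc_lt_iff[OF s])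
  then show ?thesis unfolding colset_def by (simp add: card_image)
qed

lemma colset_Pset:
  assumes T: "flagged_ssyt Cs a b T" and i: "i < n"
  shows "colset T i \<in> Pset (a0 i) (b0 i) (ct i - cb i + 1)"
proof -
  have "colset T i \<subseteq> {a0 i..b0 i}"
    using T i unfolding colset_def flagged_ssyt_def a0_def b0_def by (force simp: Cs_iff)
  moreover have "int (card (colset T i)) = ct i - cb i + 1"
    using card_colset[OF col_sinc[OF T i]] hML[of i] by (simp add: ct_def cb_def of_nat_diff)
  ultimately show ?thesis by (simp add: Pset_def)
qed

lemma arith_ct: "(m2::nat) \<le> m1 \<Longrightarrow> (int (Suc i) - int m1 - 1 + K - int B < int (Suc (Suc i)) - int m2 - 1 + K - int A) \<longleftrightarrow> A \<le> B + (m1 - m2)"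
  by linarith

lemma row_good:
  assumes T: "\<And>i. i < n \<Longrightarrow> sinc (\<lambda>r. T (r, Suc i)) (M i) (L i)" and i: "Suc i < n"
  shows "(\<forall>r. (r, Suc i) \<in> Cs \<and> (r, Suc (Suc i)) \<in> Cs \<longrightarrow> T (r, Suc i) \<le> T (r, Suc (Suc i)))
     \<longleftrightarrow> (\<forall>v. ct i - int (Nc (colset T i) v) < ct (Suc i) - int (Nc (colset T (Suc i)) v))"
proof -
  have s1: "sinc (\<lambda>r. T (r, Suc i)) (M i) (L i)" and s2: "sinc (\<lambda>r. T (r, Suc (Suc i))) (M (Suc i)) (L (Suc i))"
    using T i by auto
  have lhs: "(\<forall>r. (r, Suc i) \<in> Cs \<and> (r, Suc (Suc i)) \<in> Cs \<longrightarrow> T (r, Suc i) \<le> T (r, Suc (Suc i)))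
      \<longleftrightarrow> (\<forall>r. M i < r \<and> r \<le> L (Suc i) \<longrightarrow> T (r, Suc i) \<le> T (r, Suc (Suc i)))"
    using i Mmono[of i] Lmono[of i] by (auto simp: Cs_iff)
  have rhs: "(\<forall>v. ct i - int (Nc (colset T i) v) < ct (Suc i) - int (Nc (colset T (Suc i)) v))
      \<longleftrightarrow> (\<forall>v. card {r\<in>{M (Suc i)<..L (Suc i)}. T (r, Suc (Suc i)) < v} \<le> card {r\<in>{M i<..L i}. T (r, Suc i) < v} + (M i - M (Suc i)))"
    unfolding Nc_colset[OF s1] Nc_colset[OF s2] ct_def using arith_ct[OF Mmono[of i]] by presburger
  show ?thesis unfolding lhs rhs by (rule row_count[OF s1 s2 Mmono Lmono])
qed

end

context tabl begin

lemma shift_image: "(\<lambda>r. r - mm - 1) ` {mm<..ll} = {..<ll - (mm::nat)}"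
proof (intro equalityI subsetI)
  fix p assume "p \<in> (\<lambda>r. r - mm - 1) ` {mm<..ll}" then show "p \<in> {..<ll - mm}" by auto
next
  fix p assume "p \<in> {..<ll - mm}"
  then have "p + mm + 1 \<in> {mm<..ll}" "p = (p + mm + 1) - mm - 1" by auto
  then show "p \<in> (\<lambda>r. r - mm - 1) ` {mm<..ll}" by blast
qed

lemma shift_image2: "(\<lambda>p. mm + 1 + p) ` {..<ll - mm} = {mm<..(ll::nat)}" if "mm \<le> ll"
proof (intro equalityI subsetI)
  fix r assume "r \<in> (\<lambda>p. mm + 1 + p) ` {..<ll - mm}" then show "r \<in> {mm<..ll}" by auto
next
  fix r assume "r \<in> {mm<..ll}"
  then have "r - mm - 1 \<in> {..<ll - mm}" "r = mm + 1 + (r - mm - 1)" by auto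
  then show "r \<in> (\<lambda>p. mm + 1 + p) ` {..<ll - mm}" by blast
qed

lemma weight:
  assumes T: "flagged_ssyt Cs a b T"
  shows "(\<Prod>c\<in>Cs. \<phi> (T c) (int (snd c) - int (fst c) + K)) = (\<Prod>i=0..<n. Wc \<phi> (ct i) (colset T i))"
proof -
  have Cs_eq: "Cs = (\<lambda>(i, r). (r, Suc i)) ` (SIGMA i:{0..<n}. {M i<..L i})"
    unfolding Cs_def by auto
  have inj: "inj_on (\<lambda>(i, r). (r, Suc i)) (SIGMA i:{0..<n}. {M i<..L i})"
    by (auto simp: inj_on_def)
  have "(\<Prod>c\<in>Cs. \<phi> (T c) (int (snd c) - int (fst c) + K))
      = (\<Prod>ir\<in>(SIGMA i:{0..<n}. {M i<..L i}). \<phi> (T (snd ir, Suc (fst ir))) (int (Suc (fst ir)) - int (snd ir) + K))"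
    unfolding Cs_eq by (subst prod.reindex[OF inj]) (simp add: case_prod_unfold)
  also have "\<dots> = (\<Prod>i=0..<n. \<Prod>r\<in>{M i<..L i}. \<phi> (T (r, Suc i)) (int (Suc i) - int r + K))"
    by (subst prod.Sigma) (auto simp: case_prod_unfold)
  also have "\<dots> = (\<Prod>i=0..<n. Wc \<phi> (ct i) (colset T i))"
  proof (intro prod.cong refl)
    fix i assume i: "i \<in> {0..<n}"
    have s: "sinc (\<lambda>r. T (r, Suc i)) (M i) (L i)" using col_sinc[OF T] i by auto
    have injc: "inj_on (\<lambda>r. T (r, Suc i)) {M i<..L i}"
      by (rule inj_onI) (metis greaterThanAtMost_iff less_irrefl linorder_neqE_nat sinc_lt_iff[OF s])
    have nc: "int (Nc (colset T i) (T (r, Suc i))) = int r - int (M i) - 1" if r: "r \<in> {M i<..L i}" for r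
    proof -
      have "{r'\<in>{M i<..L i}. T (r', Suc i) < T (r, Suc i)} = {M i<..<r}"
        using sinc_lt_iff[OF s] r by auto
      then show ?thesis unfolding Nc_colset[OF s] using r by auto
    qed
    have "Wc \<phi> (ct i) (colset T i) = (\<Prod>r\<in>{M i<..L i}. \<phi> (T (r, Suc i)) (ct i - int (Nc (colset T i) (T (r, Suc i)))))"
      unfolding Wc_def colset_def by (subst prod.reindex[OF injc]) (simp add: colset_def)
    also have "\<dots> = (\<Prod>r\<in>{M i<..L i}. \<phi> (T (r, Suc i)) (int (Suc i) - int r + K))"
      by (intro prod.cong refl) (simp add: nc ct_def algebra_simps)
    finally show "(\<Prod>r\<in>{M i<..L i}. \<phi> (T (r, Suc i)) (int (Suc i) - int r + K)) = Wc \<phi> (ct i) (colset T i)" ..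
  qed
  finally show ?thesis .
qed

lemma fwd_Good:
  assumes T: "T \<in> SSYT0 Cs a b"
  shows "fwd T \<in> Goodt"
proof -
  have F: "flagged_ssyt Cs a b T" using T by (simp add: SSYT0_def)
  have s: "\<And>i. i < n \<Longrightarrow> sinc (\<lambda>r. T (r, Suc i)) (M i) (L i)" using col_sinc[OF F] by auto
  have "fwd T \<in> PiE {0..<n} (\<lambda>i. Pset (a0 i) (b0 i) (ct i - cb i + 1))"
    unfolding fwd_def using colset_Pset[OF F] by auto
  moreover have "ct i - int (Nc (fwd T i) v) < ct (Suc i) - int (Nc (fwd T (Suc i)) v)" if i: "Suc i < n" for i v
  proof -
    have "\<forall>r. (r, Suc i) \<in> Cs \<and> (r, Suc (Suc i)) \<in> Cs \<longrightarrow> T (r, Suc i) \<le> T (r, Suc (Suc i))"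
      using F unfolding flagged_ssyt_def by auto
    then show ?thesis using row_good[OF s i] i by (simp add: fwd_def)
  qed
  ultimately show ?thesis unfolding Goodt_def by auto
qed

lemma bwd_col:
  assumes S: "S \<in> Goodt" and i: "i < n"
  shows "sinc (\<lambda>r. bwd S (r, Suc i)) (M i) (L i)" and "colset (bwd S) i = S i"
    and "\<And>r. M i < r \<Longrightarrow> r \<le> L i \<Longrightarrow> bwd S (r, Suc i) = enum (S i) (r - M i - 1)"
proof -
  have SP: "S i \<in> Pset (a0 i) (b0 i) (ct i - cb i + 1)" using S i by (auto simp: Goodt_def)
  then have fin: "finite (S i)" and cardS: "card (S i) = L i - M i"
    using hML[of i] by (auto simp: Pset_def ct_def cb_def dest: finite_subset)
  show bw: "\<And>r. M i < r \<Longrightarrow> r \<le> L i \<Longrightarrow> bwd S (r, Suc i) = enum (S i) (r - M i - 1)"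
    using i by (simp add: bwd_def Cs_iff)
  show "sinc (\<lambda>r. bwd S (r, Suc i)) (M i) (L i)"
    unfolding sinc_def using bw fin cardS by (auto intro!: enum_mono)
  have "colset (bwd S) i = (\<lambda>r. enum (S i) (r - M i - 1)) ` {M i<..L i}"
    unfolding colset_def using bw by auto
  also have "\<dots> = enum (S i) ` {..<L i - M i}"
    by (subst shift_image[symmetric]) (simp add: image_image)
  also have "\<dots> = S i" using enum_image[OF fin] cardS by simp
  finally show "colset (bwd S) i = S i" .
qed

lemma bwd_SSYT:
  assumes S: "S \<in> Goodt"
  shows "bwd S \<in> SSYT0 Cs a b"
proof -
  have SP: "\<And>i. i < n \<Longrightarrow> S i \<in> Pset (a0 i) (b0 i) (ct i - cb i + 1)" using S by (auto simp: Goodt_def)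
  have fl: "a j \<le> bwd S (r, j) \<and> bwd S (r, j) \<le> b j" if rj: "(r, j) \<in> Cs" for r j
  proof -
    obtain i where ij: "j = Suc i" "i < n" "M i < r" "r \<le> L i" using rj by (auto elim!: Cs_cases)
    have fin: "finite (S i)" and cardS: "card (S i) = L i - M i" and sub: "S i \<subseteq> {a0 i..b0 i}"
      using SP[OF ij(2)] hML[of i] by (auto simp: Pset_def ct_def cb_def dest: finite_subset)
    have "enum (S i) (r - M i - 1) \<in> S i" using ij fin cardS by (intro enum_in) auto
    then show ?thesis using bwd_col(3)[OF S ij(2) ij(3,4)] sub ij by (auto simp: a0_def b0_def)
  qed
  have colstrict: "bwd S (r, j) < bwd S (r + 1, j)" if rj: "(r, j) \<in> Cs" "(r + 1, j) \<in> Cs" for r j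
  proof -
    obtain i where ij: "j = Suc i" "i < n" "M i < r" "r + 1 \<le> L i" using rj by (auto elim!: Cs_cases)
    show ?thesis using bwd_col(1)[OF S ij(2)] ij unfolding sinc_def by auto
  qed
  have row: "bwd S (r, j) \<le> bwd S (r, j + 1)" if rj: "(r, j) \<in> Cs" "(r, j + 1) \<in> Cs" for r j
  proof -
    obtain i where ij: "j = Suc i" "i < n" using rj by (auto elim!: Cs_cases)
    have i1: "Suc i < n" using rj ij by (auto simp: Cs_iff)
    have s: "\<And>i. i < n \<Longrightarrow> sinc (\<lambda>r. bwd S (r, Suc i)) (M i) (L i)" using bwd_col(1)[OF S] by auto
    have "\<forall>v. ct i - int (Nc (colset (bwd S) i) v) < ct (Suc i) - int (Nc (colset (bwd S) (Suc i)) v)"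
      using S i1 bwd_col(2)[OF S] ij(2) by (auto simp: Goodt_def)
    then show ?thesis using row_good[OF s i1] rj ij by auto
  qed
  have "flagged_ssyt Cs a b (bwd S)" unfolding flagged_ssyt_def using fl colstrict row by auto
  moreover have "\<forall>c. c \<notin> Cs \<longrightarrow> bwd S c = 0" by (auto simp: bwd_def)
  ultimately show ?thesis by (simp add: SSYT0_def)
qed

lemma fwd_bwd: "S \<in> Goodt \<Longrightarrow> fwd (bwd S) = S"
  unfolding fwd_def using bwd_col(2) by (auto simp: Goodt_def PiE_def extensional_def restrict_def fun_eq_iff)

lemma bwd_fwd:
  assumes T: "T \<in> SSYT0 Cs a b"
  shows "bwd (fwd T) = T"
proof
  fix c
  have F: "flagged_ssyt Cs a b T" using T by (simp add: SSYT0_def)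
  show "bwd (fwd T) c = T c"
  proof (cases "c \<in> Cs")
    case False then show ?thesis using T by (cases c) (auto simp: bwd_def SSYT0_def)
  next
    case True
    then obtain r i where c: "c = (r, Suc i)" "i < n" "M i < r" "r \<le> L i" by (auto elim: Cs_cases)
    have s: "sinc (\<lambda>r. T (r, Suc i)) (M i) (L i)" using col_sinc[OF F c(2)] .
    define f where "f p = T (M i + 1 + p, Suc i)" for p
    have sf: "\<And>p q. p < q \<Longrightarrow> q < L i - M i \<Longrightarrow> f p < f q"
      using s unfolding f_def sinc_def by auto
    have "f ` {..<L i - M i} = (\<lambda>r. T (r, Suc i)) ` ((\<lambda>p. M i + 1 + p) ` {..<L i - M i})"
      by (simp add: f_def image_image)
    then have cs: "colset T i = f ` {..<L i - M i}"
      unfolding colset_def shift_image2[OF hML[of i]] by simp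
    have "enum (colset T i) (r - M i - 1) = f (r - M i - 1)"
      unfolding cs using c by (intro enum_of_image[OF sf]) auto
    also have "\<dots> = T c" using c by (simp add: f_def)
    finally show ?thesis using True c by (simp add: bwd_def fwd_def)
  qed
qed

theorem tab_bij:
  "(\<Sum>T\<in>SSYT0 Cs a b. \<Prod>c\<in>Cs. \<phi> (T c) (int (snd c) - int (fst c) + K))
     = (\<Sum>S\<in>Goodt. \<Prod>i=0..<n. Wc \<phi> (ct i) (S i))"
proof (rule sum.reindex_bij_witness[where j = fwd and i = bwd])
  fix T assume T: "T \<in> SSYT0 Cs a b"
  show "bwd (fwd T) = T" using bwd_fwd[OF T] .
  show "fwd T \<in> Goodt" using fwd_Good[OF T] .
  have F: "flagged_ssyt Cs a b T" using T by (simp add: SSYT0_def)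
  show "(\<Prod>i=0..<n. Wc \<phi> (ct i) (fwd T i)) = (\<Prod>c\<in>Cs. \<phi> (T c) (int (snd c) - int (fst c) + K))"
    unfolding weight[OF F] by (intro prod.cong refl) (simp add: fwd_def)
next
  fix S assume S: "S \<in> Goodt"
  show "fwd (bwd S) = S" using fwd_bwd[OF S] .
  show "bwd S \<in> SSYT0 Cs a b" using bwd_SSYT[OF S] .
qed

end

lemma conj_card: "conj la j = card {k. k < length la \<and> j \<le> la ! k}"
  unfolding conj_def by (rule length_filter_conv_card)

lemma conj_antimono: "j \<le> j' \<Longrightarrow> conj la j' \<le> conj la j"
  unfolding conj_card by (intro card_mono) auto

lemma part_sorted:
  assumes "is_partition la" "k \<le> k'" "k' < length la"
  shows "la ! k' \<le> la ! k"
proof (cases "k = k'")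
  case True then show ?thesis by simp
next
  case False
  then show ?thesis using assms unfolding is_partition_def
    by (metis le_neq_implies_less sorted_wrt_nth_less)
qed

lemma part_conj:
  assumes P: "is_partition la" and r: "1 \<le> r" and c: "1 \<le> c"
  shows "c \<le> part la r \<longleftrightarrow> r \<le> conj la c"
proof
  assume h: "c \<le> part la r"
  then have rl: "r \<le> length la" and pr: "part la r = la ! (r - 1)" using c r by (auto simp: part_def split: if_splits)
  have "{0..<r} \<subseteq> {k. k < length la \<and> c \<le> la ! k}"
  proof
    fix k assume "k \<in> {0..<r}"
    then have "k \<le> r - 1" "k < length la" using rl by auto
    then have "la ! (r - 1) \<le> la ! k" using part_sorted[OF P, of k "r - 1"] rl r by auto
    then show "k \<in> {k. k < length la \<and> c \<le> la ! k}" using h pr \<open>k < length la\<close> by auto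
  qed
  then have "card {0..<r} \<le> conj la c" unfolding conj_card by (intro card_mono) auto
  then show "r \<le> conj la c" by simp
next
  assume h: "r \<le> conj la c"
  show "c \<le> part la r"
  proof (rule ccontr)
    assume nc: "\<not> c \<le> part la r"
    have "{k. k < length la \<and> c \<le> la ! k} \<subseteq> {..<r - 1}"
    proof
      fix k assume k: "k \<in> {k. k < length la \<and> c \<le> la ! k}"
      show "k \<in> {..<r - 1}"
      proof (rule ccontr)
        assume "k \<notin> {..<r - 1}"
        then have "r - 1 \<le> k" by simp
        then have "r \<le> length la" using k r by auto
        then have "part la r = la ! (r - 1)" using r by (simp add: part_def)
        moreover have "la ! k \<le> la ! (r - 1)" using part_sorted[OF P \<open>r - 1 \<le> k\<close>] k by auto
        ultimately show False using nc k by auto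
      qed
    qed
    then have "conj la c \<le> card {..<r - 1}" unfolding conj_card by (intro card_mono) auto
    then show False using h r by simp
  qed
qed

lemma part_le_first:
  assumes P: "is_partition la" and r: "1 \<le> r"
  shows "part la r \<le> part la 1"
proof (cases "r \<le> length la")
  case True
  then show ?thesis using part_sorted[OF P, of 0 "r - 1"] r by (auto simp: part_def)
next
  case False then show ?thesis by (simp add: part_def)
qed

lemma conj_sub:
  assumes P: "is_partition la" and Q: "is_partition mu" and S: "subpart mu la" and j: "1 \<le> j"
  shows "conj mu j \<le> conj la j"
proof (cases "conj mu j = 0")
  case True then show ?thesis by simp
next
  case False
  then have "j \<le> part mu (conj mu j)" using part_conj[OF Q, of "conj mu j" j] j by simp
  also have "\<dots> \<le> part la (conj mu j)" using S by (simp add: subpart_def)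
  finally show ?thesis using part_conj[OF P, of "conj mu j" j] j False by simp
qed

lemma tabl_inst:
  assumes P: "is_partition la" and Q: "is_partition mu" and S: "subpart mu la"
  shows "tabl (\<lambda>i. conj mu (Suc i)) (\<lambda>i. conj la (Suc i))"
  by (rule tabl.intro) (auto intro: conj_sub[OF P Q S] conj_antimono)

lemma skew_cells_Cs:
  assumes P: "is_partition la" and Q: "is_partition mu" and S: "subpart mu la" and n: "part la 1 \<le> n"
  shows "skew_cells la mu = tabl.Cs n (\<lambda>i. conj mu (Suc i)) (\<lambda>i. conj la (Suc i))"
proof (intro equalityI subsetI)
  fix c assume c: "c \<in> skew_cells la mu"
  obtain r col where rc: "c = (r, col)" by (cases c)
  have h: "1 \<le> r" "1 \<le> col" "part mu r < col" "col \<le> part la r" using c rc by (auto simp: skew_cells_def)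
  obtain i where i: "col = Suc i" using h(2) by (cases col) auto
  have "col \<le> n" using h part_le_first[OF P h(1)] n by simp
  moreover have "conj mu col < r" using part_conj[OF Q h(1) h(2)] h(3) by simp
  moreover have "r \<le> conj la col" using part_conj[OF P h(1) h(2)] h(4) by simp
  ultimately show "c \<in> tabl.Cs n (\<lambda>i. conj mu (Suc i)) (\<lambda>i. conj la (Suc i))"
    unfolding tabl.Cs_def[OF tabl_inst[OF P Q S]] rc i by auto
next
  fix c assume "c \<in> tabl.Cs n (\<lambda>i. conj mu (Suc i)) (\<lambda>i. conj la (Suc i))"
  then obtain r i where c: "c = (r, Suc i)" "i < n" "conj mu (Suc i) < r" "r \<le> conj la (Suc i)"
    unfolding tabl.Cs_def[OF tabl_inst[OF P Q S]] by auto
  have r: "1 \<le> r" using c by simp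
  have "part mu r < Suc i" using part_conj[OF Q r, of "Suc i"] c by simp
  moreover have "Suc i \<le> part la r" using part_conj[OF P r, of "Suc i"] c by simp
  ultimately show "c \<in> skew_cells la mu" using c r by (simp add: skew_cells_def)
qed

context tabl begin
lemma finite_Cs: "finite Cs"
proof -
  have "Cs = (\<lambda>(i, r). (r, Suc i)) ` (SIGMA i:{0..<n}. {M i<..L i})" unfolding Cs_def by auto
  then show ?thesis by auto
qed
end

theorem rshape_main:
  fixes x \<alpha> \<beta> :: "nat \<Rightarrow> 'a::comm_ring_1"
  assumes P: "is_partition la" and Q: "is_partition mu" and S: "subpart mu la"
    and n: "part la 1 \<le> n" and F: "column_flags la mu n a b"
  shows "gflag (rcont r la) la mu n a b m x \<alpha> \<beta> =
     (\<Sum>T\<in>g_tabs m (skew_cells la mu) (rcont r la) a b. tab_wt (skew_cells la mu) x \<alpha> \<beta> T)"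
proof -
  define M where "M i = conj mu (Suc i)" for i
  define L where "L i = conj la (Suc i)" for i
  define K where "K = r - 1 + int (conj la 1)"
  define y where "y = gy m x \<alpha> \<beta>"
  define z where "z = gz m \<alpha> \<beta>"
  define \<phi> where "\<phi> s c = y s - z (s + c)" for s c
  interpret T: tabl n M L K a b \<phi>
    using tabl_inst[OF P Q S] unfolding M_def L_def .
  have C: "skew_cells la mu = T.Cs" using skew_cells_Cs[OF P Q S n] unfolding M_def L_def .
  interpret G: lgv_shape n T.ct T.cb T.a0 T.b0 \<phi>
  proof
    fix t assume t: "Suc t < n"
    show "T.ct t < T.ct (Suc t)" using T.Mmono[of t] by (simp add: T.ct_def)
    show "T.cb t < T.cb (Suc t)" using T.Lmono[of t] by (simp add: T.cb_def)
    assume "\<not> T.ct t + 2 \<le> T.cb (Suc t)"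
    then have ov: "conj mu (Suc t) < conj la (Suc t + 1)" by (simp add: T.ct_def T.cb_def M_def L_def)
    have "1 \<le> Suc t" "Suc t < n" using t by auto
    then have "a (Suc t) - a (Suc t + 1) \<le> int (conj mu (Suc t)) - int (conj mu (Suc t + 1)) + 1 \<and>
        b (Suc t) - b (Suc t + 1) \<le> int (conj la (Suc t)) - int (conj la (Suc t + 1)) + 1"
      using F ov unfolding column_flags_def by blast
    then show "T.a0 t - T.a0 (Suc t) \<le> T.ct (Suc t) - T.ct t \<and> T.b0 t - T.b0 (Suc t) \<le> T.cb (Suc t) - T.cb t"
      by (simp add: T.ct_def T.cb_def T.a0_def T.b0_def M_def L_def)
  qed
  have Geq: "G.Good = T.Goodt" unfolding G.Good_def T.Goodt_def G.paths_def ..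
  have rc: "rcont r la i j = int j - int i + K" for i j by (simp add: rcont_def K_def)
  have mat: "(\<lambda>(i0, j0). let i = i0 + 1; j = j0 + 1;
           a' = a j + rcont r la (conj mu j + 1) j;
           b' = b i + rcont r la (conj la i) i
       in esup (int (conj la i) - int i - int (conj mu j) + int j)
               (alph y (a j) (b i)) (alph z a' b'))
      = (\<lambda>(i, j). \<Sum>S\<in>G.paths j i. Wc \<phi> (T.ct j) S)"
  proof (intro ext, clarify)
    fix i0 j0
    define A B c k where "A = T.a0 j0" and "B = T.b0 i0" and "c = T.ct j0" and "k = T.ct j0 - T.cb i0 + 1"
    have e1: "int (conj la (i0 + 1)) - int (i0 + 1) - int (conj mu (j0 + 1)) + int (j0 + 1) = k"
      by (simp add: k_def T.ct_def T.cb_def M_def L_def)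
    have e2: "a (j0 + 1) = A" "b (i0 + 1) = B" by (simp_all add: A_def B_def T.a0_def T.b0_def)
    have e3: "a (j0 + 1) + rcont r la (conj mu (j0 + 1) + 1) (j0 + 1) = A + c"
      by (simp add: A_def c_def T.a0_def T.ct_def rc M_def)
    have e4: "b (i0 + 1) + rcont r la (conj la (i0 + 1)) (i0 + 1) = B + c - k + 1"
      by (simp add: B_def c_def k_def T.b0_def T.ct_def T.cb_def rc L_def)
    have e5: "rcont r la (Suc (conj mu (Suc j0))) (Suc j0) = T.ct j0"
      by (simp add: T.ct_def rc M_def)
    have e6: "rcont r la (conj la (Suc i0)) (Suc i0) = T.cb i0"
      by (simp add: T.cb_def rc L_def)
    have "esup k (alph y A B) (alph z (A + c) (B + c - k + 1)) = (\<Sum>S\<in>Pset A B k. Wc \<phi> c S)"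
      unfolding \<phi>_def by (rule column)
    then show "(let i = i0 + 1; j = j0 + 1;
           a' = a j + rcont r la (conj mu j + 1) j;
           b' = b i + rcont r la (conj la i) i
       in esup (int (conj la i) - int i - int (conj mu j) + int j)
               (alph y (a j) (b i)) (alph z a' b')) = (\<Sum>S\<in>G.paths j0 i0. Wc \<phi> (T.ct j0) S)"
      unfolding Let_def e1 e3 e4 e2 by (simp add: G.paths_def A_def B_def c_def k_def e5 e6)
  qed
  have "gflag (rcont r la) la mu n a b m x \<alpha> \<beta> = det (mat n n (\<lambda>(i, j). \<Sum>S\<in>G.paths j i. Wc \<phi> (T.ct j) S))"
    unfolding gflag_def Sdet_def y_def[symmetric] z_def[symmetric] mat ..
  also have "\<dots> = (\<Sum>S\<in>T.Goodt. \<Prod>i=0..<n. Wc \<phi> (T.ct i) (S i))" using G.lgv_main Geq by simp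
  also have "\<dots> = (\<Sum>T\<in>SSYT0 T.Cs a b. \<Prod>c\<in>T.Cs. \<phi> (T c) (int (snd c) - int (fst c) + K))"
    by (rule T.tab_bij[symmetric])
  also have "\<dots> = (\<Sum>T\<in>SSYT0 T.Cs a b. \<Prod>c\<in>T.Cs. gy m x \<alpha> \<beta> (T c) - gz m \<alpha> \<beta> (T c + rcont r la (fst c) (snd c)))"
    by (simp add: \<phi>_def y_def z_def rc algebra_simps)
  also have "\<dots> = (\<Sum>T\<in>g_tabs m (skew_cells la mu) (rcont r la) a b. tab_wt (skew_cells la mu) x \<alpha> \<beta> T)"
    unfolding C by (rule gtabs_sum[symmetric, OF T.finite_Cs])
  finally show ?thesis .
qed

lemma esym_perm:
  assumes "mset xs = mset ys"
  shows "esym xs k = esym ys k"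
proof -
  obtain p where p: "p permutes {..<length ys}" "permute_list p ys = xs"
    using mset_eq_permutation[OF assms] by blast
  define n where "n = length ys"
  have len: "length xs = n" using p(2) by (metis length_permute_list n_def)
  have nth: "xs ! i = ys ! p i" if "i < n" for i using p that permute_list_nth n_def by metis
  define E where "E = {S. S \<subseteq> {..<n} \<and> card S = k}"
  have inj: "inj p" using p(1) by (rule permutes_inj)
  have "esym xs k = (\<Sum>S\<in>E. \<Prod>i\<in>S. ys ! p i)"
    unfolding esym_def len E_def[symmetric] by (intro sum.cong refl prod.cong) (auto simp: E_def nth)
  also have "\<dots> = (\<Sum>S\<in>E. \<Prod>i\<in>p ` S. ys ! i)"
    by (intro sum.cong refl) (simp add: prod.reindex[OF inj_on_subset[OF inj]])
  also have "\<dots> = (\<Sum>S\<in>E. \<Prod>i\<in>S. ys ! i)"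
  proof (rule sum.reindex_bij_witness[where j = "\<lambda>S. p ` S" and i = "\<lambda>S. inv_into UNIV p ` S"])
    fix S assume S: "S \<in> E"
    show "inv_into UNIV p ` p ` S = S" using permutes_inverses(2)[OF p(1)] by (simp add: image_image)
    have "p ` S \<subseteq> {..<n}" using S p(1) by (auto simp: E_def n_def dest: permutes_in_image)
    moreover have "card (p ` S) = k" using S inj by (simp add: E_def card_image inj_on_subset)
    ultimately show "p ` S \<in> E" by (simp add: E_def)
  next
    fix S assume S: "S \<in> E"
    show "p ` inv_into UNIV p ` S = S" using permutes_inverses(1)[OF p(1)] by (simp add: image_image)
    have ip: "inv_into UNIV p permutes {..<n}" using permutes_inv[OF p(1)] by (simp add: n_def)
    have "inv_into UNIV p ` S \<subseteq> {..<n}" using S ip by (auto simp: E_def dest: permutes_in_image)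
    moreover have "card (inv_into UNIV p ` S) = k" using S permutes_inj[OF ip] by (simp add: E_def card_image inj_on_subset)
    ultimately show "inv_into UNIV p ` S \<in> E" by (simp add: E_def)
  qed simp
  also have "\<dots> = esym ys k" unfolding esym_def E_def n_def ..
  finally show ?thesis .
qed

lemma hsym_perm:
  assumes "mset xs = mset ys"
  shows "hsym xs k = hsym ys k"
proof -
  obtain p where p: "p permutes {..<length ys}" "permute_list p ys = xs"
    using mset_eq_permutation[OF assms] by blast
  define n where "n = length ys"
  have len: "length xs = n" using p(2) by (metis length_permute_list n_def)
  have nth: "xs ! i = ys ! p i" if "i < n" for i using p that permute_list_nth n_def by metis
  have pn: "p permutes {..<n}" using p(1) by (simp add: n_def)
  have ip: "inv_into UNIV p permutes {..<n}" using permutes_inv[OF pn] .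
  have "hsym xs k = (\<Sum>f\<in>Fs n k. \<Prod>i<n. (ys ! p i) ^ f i)"
    unfolding hsym_Fs len by (intro sum.cong refl prod.cong) (auto simp: nth)
  also have "\<dots> = (\<Sum>f\<in>Fs n k. \<Prod>j<n. (ys ! j) ^ f (inv_into UNIV p j))"
  proof (intro sum.cong refl)
    fix f
    have "(\<Prod>j<n. (ys ! j) ^ f (inv_into UNIV p j)) = (\<Prod>i<n. (ys ! p i) ^ f (inv_into UNIV p (p i)))"
      using prod.permute[OF pn, of "\<lambda>j. (ys ! j) ^ f (inv_into UNIV p j)"] by (simp add: comp_def)
    then show "(\<Prod>i<n. (ys ! p i) ^ f i) = (\<Prod>j<n. (ys ! j) ^ f (inv_into UNIV p j))"
      using permutes_inverses(2)[OF pn] by simp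
  qed
  also have "\<dots> = (\<Sum>g\<in>Fs n k. \<Prod>j<n. (ys ! j) ^ g j)"
  proof (rule sum.reindex_bij_witness[where j = "\<lambda>f. f \<circ> inv_into UNIV p" and i = "\<lambda>g. g \<circ> p"])
    fix f assume f: "f \<in> Fs n k"
    show "f \<circ> inv_into UNIV p \<circ> p = f" using permutes_inverses(2)[OF pn] by (auto simp: fun_eq_iff)
    have "(f \<circ> inv_into UNIV p) j = 0" if "n \<le> j" for j
      using f that permutes_not_in[OF ip, of j] by (auto simp: Fs_def)
    moreover have "(\<Sum>j<n. (f \<circ> inv_into UNIV p) j) = (\<Sum>j<n. f j)"
      using sum.permute[OF ip, of f] by simp
    ultimately show "f \<circ> inv_into UNIV p \<in> Fs n k" using f by (auto simp: Fs_def)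
  next
    fix g assume g: "g \<in> Fs n k"
    show "g \<circ> p \<circ> inv_into UNIV p = g" using permutes_inverses(1)[OF pn] by (auto simp: fun_eq_iff)
    have "(g \<circ> p) j = 0" if "n \<le> j" for j
      using g that permutes_not_in[OF pn, of j] by (auto simp: Fs_def)
    moreover have "(\<Sum>j<n. (g \<circ> p) j) = (\<Sum>j<n. g j)"
      using sum.permute[OF pn, of g] by simp
    ultimately show "g \<circ> p \<in> Fs n k" using g by (auto simp: Fs_def)
  qed simp
  also have "\<dots> = hsym ys k" unfolding hsym_Fs n_def ..
  finally show ?thesis .
qed

lemma esup_mset:
  assumes "mset X = mset X'" "mset W = mset W'"
  shows "esup k X W = esup k X' W'"
  unfolding esup_def using esym_perm[OF assms(1)] hsym_perm[OF assms(2)] by simp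

lemma hsym_snoc0: "hsym (W @ [0]) k = hsym W k"
  by (cases k) (simp_all add: hsym_snoc)

lemma esup_zeros: "esup k X (W @ replicate m 0) = esup k X W"
proof (induction m)
  case 0 then show ?case by simp
next
  case (Suc m)
  have "W @ replicate (Suc m) 0 = (W @ replicate m 0) @ [0]" by (simp add: replicate_append_same[symmetric])
  then have "esup k X (W @ replicate (Suc m) 0) = esup k X (W @ replicate m 0)"
    unfolding esup_def using hsym_snoc0[of "W @ replicate m 0"] by simp
  then show ?case using Suc by simp
qed

lemma perm_fix:
  fixes \<sigma> :: "nat \<Rightarrow> nat"
  assumes perm: "\<sigma> permutes {0..<n}" and ge: "\<And>i. p \<le> i \<Longrightarrow> i < n \<Longrightarrow> i \<le> \<sigma> i"
  shows "\<And>i. p \<le> i \<Longrightarrow> i < n \<Longrightarrow> \<sigma> i = i"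
proof -
  define U where "U = {p..<n}"
  have into: "\<sigma> ` U \<subseteq> U"
  proof
    fix y assume "y \<in> \<sigma> ` U"
    then obtain i where i: "i \<in> U" "y = \<sigma> i" by auto
    then have "p \<le> i" "i < n" by (auto simp: U_def)
    moreover have "\<sigma> i \<in> {0..<n}" using permutes_in_image[OF perm, of i] \<open>i < n\<close> by simp
    ultimately show "y \<in> U" using ge[of i] i by (auto simp: U_def)
  qed
  have inj: "inj_on \<sigma> U" using permutes_inj[OF perm] by (rule inj_on_subset) simp
  have img: "\<sigma> ` U = U" by (rule card_subset_eq) (use into inj in \<open>auto simp: card_image U_def\<close>)
  have sums: "(\<Sum>i\<in>U. \<sigma> i) = (\<Sum>i\<in>U. i)"
    using sum.reindex[OF inj, of "\<lambda>i. i"] img by simp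
  fix i assume i: "p \<le> i" "i < n"
  show "\<sigma> i = i"
  proof (rule ccontr)
    assume "\<sigma> i \<noteq> i"
    then have "i < \<sigma> i" using ge[OF i] by simp
    then have "(\<Sum>i\<in>U. i) < (\<Sum>i\<in>U. \<sigma> i)"
      using i ge by (intro sum_strict_mono_ex1) (auto simp: U_def)
    then show False using sums by simp
  qed
qed

lemma det_block_eq:
  fixes A B :: "'a::comm_ring_1 mat"
  assumes A: "A \<in> carrier_mat n n" and B: "B \<in> carrier_mat n n"
    and rows: "\<And>i j. i < p \<Longrightarrow> j < n \<Longrightarrow> A $$ (i, j) = B $$ (i, j)"
    and low: "\<And>i j. p \<le> i \<Longrightarrow> i < n \<Longrightarrow> j < i \<Longrightarrow> A $$ (i, j) = 0 \<and> B $$ (i, j) = 0"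
    and diag: "\<And>i. p \<le> i \<Longrightarrow> i < n \<Longrightarrow> A $$ (i, i) = 1 \<and> B $$ (i, i) = 1"
  shows "det A = det B"
proof -
  have "(\<Prod>i=0..<n. A $$ (i, \<sigma> i)) = (\<Prod>i=0..<n. B $$ (i, \<sigma> i))" if perm: "\<sigma> permutes {0..<n}" for \<sigma>
  proof (cases "\<forall>i. p \<le> i \<and> i < n \<longrightarrow> i \<le> \<sigma> i")
    case True
    then have hfix: "\<And>i. p \<le> i \<Longrightarrow> i < n \<Longrightarrow> \<sigma> i = i" using perm_fix[OF perm] by blast
    show ?thesis
    proof (intro prod.cong refl)
      fix i assume i: "i \<in> {0..<n}"
      show "A $$ (i, \<sigma> i) = B $$ (i, \<sigma> i)"
      proof (cases "i < p")
        case True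
        have "\<sigma> i < n" using perm i by (auto dest: permutes_in_image)
        then show ?thesis using rows True by simp
      next
        case False then show ?thesis using hfix diag i by simp
      qed
    qed
  next
    case False
    then obtain i where i: "p \<le> i" "i < n" "\<sigma> i < i" by (auto simp: not_le)
    have "A $$ (i, \<sigma> i) = 0" "B $$ (i, \<sigma> i) = 0" using low i by auto
    then have "(\<Prod>i=0..<n. A $$ (i, \<sigma> i)) = 0" "(\<Prod>i=0..<n. B $$ (i, \<sigma> i)) = 0"
      using i by (auto intro!: prod_zero)
    then show ?thesis by simp
  qed
  then show ?thesis unfolding det_def'[OF A] det_def'[OF B] by simp
qed

lemma alph_split:
  assumes "p \<le> r + 1" "r \<le> q"
  shows "alph g p q = alph g p r @ alph g (r + 1) q"
proof (cases "p \<le> r")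
  case True then show ?thesis unfolding alph_def using upto_split2[OF True assms(2)] by simp
next
  case False then have "r = p - 1" using assms by simp
  then show ?thesis unfolding alph_def by simp
qed

lemma mset_alph:
  assumes inj: "inj_on f {p..q}" and img: "f ` {p..q} = A" and gh: "\<And>k. p \<le> k \<Longrightarrow> k \<le> q \<Longrightarrow> g k = h (f k)"
  shows "mset (alph g p q) = image_mset h (mset_set A)"
proof -
  have "mset (alph g p q) = image_mset g (mset_set {p..q})"
    unfolding alph_def by (simp add: mset_set_set[symmetric])
  also have "\<dots> = image_mset (h \<circ> f) (mset_set {p..q})"
    by (intro image_mset_cong) (simp add: gh)
  also have "\<dots> = image_mset h (image_mset f (mset_set {p..q}))" by (simp add: multiset.map_comp)
  also have "\<dots> = image_mset h (mset_set A)" using image_mset_mset_set[OF inj] img by simp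
  finally show ?thesis .
qed

lemma img_up: "(\<lambda>k. nat (k - s)) ` {s + 1..s + int t} = {1..<t + 1}"
proof (intro equalityI subsetI)
  fix y assume "y \<in> (\<lambda>k. nat (k - s)) ` {s + 1..s + int t}" then show "y \<in> {1..<t + 1}" by auto
next
  fix y assume y: "y \<in> {1..<t + 1}"
  then have "s + int y \<in> {s + 1..s + int t}" "y = nat ((s + int y) - s)" by auto
  then show "y \<in> (\<lambda>k. nat (k - s)) ` {s + 1..s + int t}" by blast
qed

lemma inj_up: "inj_on (\<lambda>k. nat (k - s)) {s + 1..s + int t}"
  by (rule inj_onI) auto

lemma img_down: "(\<lambda>k. nat (1 - k)) ` {1 - int t..0} = {1..<t + 1}"
proof (intro equalityI subsetI)
  fix y assume "y \<in> (\<lambda>k. nat (1 - k)) ` {1 - int t..0}" then show "y \<in> {1..<t + 1}" by auto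
next
  fix y assume y: "y \<in> {1..<t + 1}"
  then have "1 - int y \<in> {1 - int t..0}" "y = nat (1 - (1 - int y))" by auto
  then show "y \<in> (\<lambda>k. nat (1 - k)) ` {1 - int t..0}" by blast
qed

lemma inj_down: "inj_on (\<lambda>k. nat (1 - k)) {1 - int t..0}"
  by (rule inj_onI) auto

lemma entry_eq:
  fixes x \<alpha> \<beta> :: "nat \<Rightarrow> 'a::comm_ring_1"
  assumes i: "1 \<le> i" and j: "1 \<le> j" and L: "1 \<le> L"
  shows "esup k (alph (gy m x \<alpha> \<beta>) (2 - int j) (int L + int m - 1)) (alph (gz m \<alpha> \<beta>) (1 - int M) (int m + int i - 1))
   = esup k (map x [1..<m + 1] @ map (\<lambda>k. - \<alpha> k) [1..<j] @ map \<beta> [1..<L]) (map (\<lambda>k. - \<alpha> k) [1..<i] @ map \<beta> [1..<M + 1])"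
proof -
  let ?y = "gy m x \<alpha> \<beta>" and ?z = "gz m \<alpha> \<beta>"
  have Y: "alph ?y (2 - int j) (int L + int m - 1) = alph ?y (1 - int (j - 1)) 0 @ alph ?y (0 + 1) (0 + int m) @ alph ?y (int m + 1) (int m + int (L - 1))"
  proof -
    have "alph ?y (2 - int j) (int L + int m - 1) = alph ?y (2 - int j) 0 @ alph ?y 1 (int L + int m - 1)"
      using alph_split[of "2 - int j" 0 "int L + int m - 1"] j L by simp
    also have "alph ?y 1 (int L + int m - 1) = alph ?y 1 (int m) @ alph ?y (int m + 1) (int L + int m - 1)"
      using alph_split[of 1 "int m" "int L + int m - 1"] L by simp
    finally show ?thesis using j L by (simp add: of_nat_diff algebra_simps)
  qed
  have Z: "alph ?z (1 - int M) (int m + int i - 1) = alph ?z (1 - int M) 0 @ alph ?z 1 (int m) @ alph ?z (int m + 1) (int m + int (i - 1))"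
  proof -
    have "alph ?z (1 - int M) (int m + int i - 1) = alph ?z (1 - int M) 0 @ alph ?z 1 (int m + int i - 1)"
      using alph_split[of "1 - int M" 0 "int m + int i - 1"] i by simp
    also have "alph ?z 1 (int m + int i - 1) = alph ?z 1 (int m) @ alph ?z (int m + 1) (int m + int i - 1)"
      using alph_split[of 1 "int m" "int m + int i - 1"] i by simp
    finally show ?thesis using i by (simp add: of_nat_diff algebra_simps)
  qed
  have y1: "mset (alph ?y (1 - int (j - 1)) 0) = image_mset (\<lambda>k. - \<alpha> k) (mset_set {1..<j})"
    using mset_alph[OF inj_down[of "j - 1"] img_down[of "j - 1"], where g = "gy m x \<alpha> \<beta>" and h = "\<lambda>k. - \<alpha> k"] j by (simp add: gy_def)
  have y2: "mset (alph ?y (0 + 1) (0 + int m)) = image_mset x (mset_set {1..<m + 1})"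
    by (rule mset_alph[OF inj_up img_up]) (simp add: gy_def)
  have y3: "mset (alph ?y (int m + 1) (int m + int (L - 1))) = image_mset \<beta> (mset_set {1..<L})"
    using mset_alph[OF inj_up[of "int m" "L - 1"] img_up[of "int m" "L - 1"], where g = "gy m x \<alpha> \<beta>" and h = \<beta>] L by (simp add: gy_def)
  have z1: "mset (alph ?z (1 - int M) 0) = image_mset \<beta> (mset_set {1..<M + 1})"
    by (rule mset_alph[OF inj_down img_down]) (simp add: gz_def)
  have z2: "alph ?z 1 (int m) = replicate m 0"
  proof -
    have "alph ?z 1 (int m) = map (\<lambda>_. 0) [1..int m]" unfolding alph_def by (intro map_cong refl) (simp add: gz_def)
    then show ?thesis by (simp add: map_replicate_const)
  qed
  have z3: "mset (alph ?z (int m + 1) (int m + int (i - 1))) = image_mset (\<lambda>k. - \<alpha> k) (mset_set {1..<i})"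
    using mset_alph[OF inj_up[of "int m" "i - 1"] img_up[of "int m" "i - 1"], where g = "gz m \<alpha> \<beta>" and h = "\<lambda>k. - \<alpha> k"] i by (simp add: gz_def)
  have mY: "mset (alph ?y (2 - int j) (int L + int m - 1)) = mset (map x [1..<m + 1] @ map (\<lambda>k. - \<alpha> k) [1..<j] @ map \<beta> [1..<L])"
    unfolding Y mset_append y1 y2 y3 mset_map mset_upt by (simp add: add_ac)
  have mZ: "mset (alph ?z (1 - int M) (int m + int i - 1)) = mset ((map (\<lambda>k. - \<alpha> k) [1..<i] @ map \<beta> [1..<M + 1]) @ replicate m 0)"
    unfolding Z mset_append z1 z2 z3 mset_map mset_upt by (simp add: add_ac)
  have "esup k (alph ?y (2 - int j) (int L + int m - 1)) (alph ?z (1 - int M) (int m + int i - 1))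
     = esup k (map x [1..<m + 1] @ map (\<lambda>k. - \<alpha> k) [1..<j] @ map \<beta> [1..<L]) ((map (\<lambda>k. - \<alpha> k) [1..<i] @ map \<beta> [1..<M + 1]) @ replicate m 0)"
    by (rule esup_mset[OF mY mZ])
  also have "\<dots> = esup k (map x [1..<m + 1] @ map (\<lambda>k. - \<alpha> k) [1..<j] @ map \<beta> [1..<L]) (map (\<lambda>k. - \<alpha> k) [1..<i] @ map \<beta> [1..<M + 1])"
    by (rule esup_zeros)
  finally show ?thesis .
qed

theorem usual_main:
  fixes x \<alpha> \<beta> :: "nat \<Rightarrow> 'a::comm_ring_1"
  assumes P: "is_partition la" and Q: "is_partition mu" and S: "subpart mu la"
    and n: "part la 1 \<le> n"
  shows "gusual la mu n m x \<alpha> \<beta> = (\<Sum>T\<in>GT_usual m la mu. tab_wt (skew_cells la mu) x \<alpha> \<beta> T)"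
proof -
  define r0 where "r0 = 1 - int (conj la 1)"
  define a1 :: "nat \<Rightarrow> int" where "a1 = (\<lambda>i. 2 - int i)"
  define b1 :: "nat \<Rightarrow> int" where "b1 = (\<lambda>i. int (conj la i) + int m - 1)"
  have uc: "ucont = rcont r0 la" by (auto simp: fun_eq_iff ucont_def rcont_def r0_def)
  have CF: "column_flags la mu n a1 b1"
    unfolding column_flags_def a1_def b1_def using conj_antimono[of _ "Suc _" mu] by force
  have GT: "GT_usual m la mu = g_tabs m (skew_cells la mu) (rcont r0 la) a1 b1"
    unfolding GT_usual_def uc a1_def b1_def ..
  have rc: "rcont r0 la i j = int j - int i" for i j by (simp add: rcont_def r0_def)
  define fA where "fA = (\<lambda>(i0, j0). let i = i0 + 1; j = j0 + 1
       in esup (int (conj la i) - int i - int (conj mu j) + int j)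
            (map x [1..<m + 1] @ map (\<lambda>k. - \<alpha> k) [1..<j] @ map \<beta> [1..<conj la i])
            (map (\<lambda>k. - \<alpha> k) [1..<i] @ map \<beta> [1..<conj mu j + 1]))"
  define fB where "fB = (\<lambda>(i0, j0).
       let i = i0 + 1; j = j0 + 1;
           a' = a1 j + rcont r0 la (conj mu j + 1) j;
           b' = b1 i + rcont r0 la (conj la i) i
       in esup (int (conj la i) - int i - int (conj mu j) + int j)
               (alph (gy m x \<alpha> \<beta>) (a1 j) (b1 i)) (alph (gz m \<alpha> \<beta>) a' b'))"
  have hMLs: "conj mu k \<le> conj la k" if "1 \<le> k" for k using conj_sub[OF P Q S that] .
  have Lpos: "1 \<le> conj la (Suc i) \<longleftrightarrow> i < part la 1" for i
    using part_conj[OF P, of 1 "Suc i"] by auto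
  have "det (mat n n fA) = det (mat n n fB)"
  proof (rule det_block_eq[where p = "part la 1"])
    show "mat n n fA \<in> carrier_mat n n" "mat n n fB \<in> carrier_mat n n" by auto
  next
    fix i j assume i: "i < part la 1" and j: "j < n"
    have L1: "1 \<le> conj la (Suc i)" using Lpos i by simp
    have e: "fB (i, j) = fA (i, j)"
    proof -
      have "fB (i, j) = esup (int (conj la (Suc i)) - int (Suc i) - int (conj mu (Suc j)) + int (Suc j))
          (alph (gy m x \<alpha> \<beta>) (2 - int (Suc j)) (int (conj la (Suc i)) + int m - 1))
          (alph (gz m \<alpha> \<beta>) (1 - int (conj mu (Suc j))) (int m + int (Suc i) - 1))"
        unfolding fB_def Let_def by (simp add: a1_def b1_def rc algebra_simps)
      also have "\<dots> = fA (i, j)"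
        unfolding fA_def Let_def by (subst entry_eq) (use L1 in auto)
      finally show ?thesis .
    qed
    show "mat n n fA $$ (i, j) = mat n n fB $$ (i, j)" using i j n e by simp
  next
    fix i j assume i: "part la 1 \<le> i" "i < n" and ji: "j < i"
    have L0: "conj la (Suc i) = 0" using Lpos[of i] i by simp
    have "int (conj la (Suc i)) - int (Suc i) - int (conj mu (Suc j)) + int (Suc j) < 0" using L0 ji by simp
    then have "fA (i, j) = 0" "fB (i, j) = 0" unfolding fA_def fB_def Let_def by (simp_all add: esup_def)
    then show "mat n n fA $$ (i, j) = 0 \<and> mat n n fB $$ (i, j) = 0" using i ji by simp
  next
    fix i assume i: "part la 1 \<le> i" "i < n"
    have L0: "conj la (Suc i) = 0" using Lpos[of i] i by simp
    then have M0: "conj mu (Suc i) = 0" using hMLs[of "Suc i"] by simp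
    have "fA (i, i) = 1" "fB (i, i) = 1" unfolding fA_def fB_def Let_def using L0 M0 by (simp_all add: esup_def)
    then show "mat n n fA $$ (i, i) = 1 \<and> mat n n fB $$ (i, i) = 1" using i by simp
  qed
  then have "gusual la mu n m x \<alpha> \<beta> = gflag (rcont r0 la) la mu n a1 b1 m x \<alpha> \<beta>"
    unfolding gusual_def gflag_def Sdet_def fA_def fB_def .
  also have "\<dots> = (\<Sum>T\<in>g_tabs m (skew_cells la mu) (rcont r0 la) a1 b1. tab_wt (skew_cells la mu) x \<alpha> \<beta> T)"
    by (rule rshape_main[OF P Q S n CF])
  finally show ?thesis unfolding GT .
qed

theorem proposition8p2:
  fixes m n :: nat and la mu :: "nat list" and r :: int
    and x \<alpha> \<beta> :: "nat \<Rightarrow> 'a::comm_ring_1"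
  assumes "is_partition la" and "is_partition mu" and "subpart mu la"
    and "part la 1 \<le> n"
  shows "(\<forall>a b. column_flags la mu n a b \<longrightarrow>
            gflag (rcont r la) la mu n a b m x \<alpha> \<beta> =
            (\<Sum>T\<in>g_tabs m (skew_cells la mu) (rcont r la) a b. tab_wt (skew_cells la mu) x \<alpha> \<beta> T))
       \<and> gusual la mu n m x \<alpha> \<beta> =
            (\<Sum>T\<in>GT_usual m la mu. tab_wt (skew_cells la mu) x \<alpha> \<beta> T)"
  using rshape_main[OF assms] usual_main[OF assms] by blast

end
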